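(* Fix $p\in[1,\infty)$. Let $\Theta:\mathcal A/\mathcal J\to\mathcal B(\ell^p)$ be a continuous algebra homomorphism such that $\Theta(\pi_{\mathcal J}(\delta_{s_i^*}))=A_i$ for $i\in\{1,2\}$. Then $\Theta$ is injective but not bounded below (i.e. there is no $c>0$ with $\|\Theta(a)\|\geqslant c\|a\|$ for all $a\in\mathcal A/\mathcal J$).
   Context: Let $\mathrm{Cu}_2$ be the involutive monoid with identity $e$ and zero element $\lozenge$ (so $\lozenge t=\lozenge=t\lozenge$ for all $t$), generated by $s_1,s_2,s_1^*,s_2^*$ subject to $s_1^*s_1=e=s_2^*s_2$ and $s_1^*s_2=\lozenge=s_2^*s_1$, with involution $t\mapsto t^*$ satisfying $(t^* )^*=t$, $(tu)^*=u^*t^*$. Let $\mathcal A=\ell^1(\mathrm{Cu}_2\setminus\{\lozenge\})$ with product $\#$ determined by bilinearity and continuity from $\delta_s\#\delta_t=\delta_{st}$ if $st\neq\lozenge$ and $\delta_s\#\delta_t=0$ if $st=\lozenge$; this is a unital Banach algebra with unit $\delta_e$. Let $f_0=\delta_e-\delta_{s_1s_1^*}-\delta_{s_2s_2^*}$, let $\mathcal J$ be the closed two-sided ideal of $\mathcal A$ generated by $f_0$, and let $\pi_{\mathcal J}:\mathcal A\to\mathcal A/\mathcal J$ be the quotient map ($\mathcal A/\mathcal J$ carries the quotient norm). For $\ell^p=\ell^p(\mathbb N)$ define $A_1,A_2\in\mathcal B(\ell^p)$ by $(A_1x)(n)=x_{2n}$ and $(A_2x)(n)=x_{2n-1}$.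 *)

theory Defs
  imports "HOL-Analysis.Analysis" "HOL-Library.Function_Algebras"
begin

datatype gen = G1 | G2

text \<open>Every nonzero element of Cu_2 has a unique normal form s_u s_v^*, where
  u, v are words over the generators (s_u = s_(u_1) ... s_(u_n)).  The pair (u,v)
  represents s_u s_v^*; the zero element is represented by None in the product.\<close>

type_synonym cu = "gen list \<times> gen list"

definition cu_e :: cu where "cu_e = ([], [])"
definition cu_s :: "gen \<Rightarrow> cu" where "cu_s i = ([i], [])"
definition cu_star :: "gen \<Rightarrow> cu" where "cu_star i = ([], [i])"

definition cu_mult :: "cu \<Rightarrow> cu \<Rightarrow> cu option" where
  "cu_mult x y = (case x of (u, v) \<Rightarrow> case y of (w, z) \<Rightarrow>
     (if (\<exists>r. w = v @ r) then Some (u @ drop (length v) w, z)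
      else if (\<exists>r. v = w @ r) then Some (u, z @ drop (length w) v)
      else None))"

definition l1 :: "(cu \<Rightarrow> complex) set" where
  "l1 = {f. (\<lambda>x. norm (f x)) summable_on UNIV}"

definition norm1 :: "(cu \<Rightarrow> complex) \<Rightarrow> real" where
  "norm1 f = infsum (\<lambda>x. norm (f x)) UNIV"

definition delta :: "cu \<Rightarrow> cu \<Rightarrow> complex" where
  "delta s = (\<lambda>y. if y = s then 1 else 0)"

text \<open>The product #: delta_s # delta_t = delta_(st) (or 0 if st is zero), extended
  bilinearly and continuously, i.e. a twisted convolution.\<close>
definition conv :: "(cu \<Rightarrow> complex) \<Rightarrow> (cu \<Rightarrow> complex) \<Rightarrow> cu \<Rightarrow> complex" where
  "conv f g = (\<lambda>x. infsum (\<lambda>(s, t). f s * g t) {(s, t). cu_mult s t = Some x})"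

definition f0 :: "cu \<Rightarrow> complex" where
  "f0 = delta cu_e - delta ([G1], [G1]) - delta ([G2], [G2])"

definition is_closed_ideal :: "(cu \<Rightarrow> complex) set \<Rightarrow> bool" where
  "is_closed_ideal I \<longleftrightarrow> I \<subseteq> l1 \<and> 0 \<in> I \<and>
     (\<forall>a\<in>I. \<forall>b\<in>I. a + b \<in> I) \<and>
     (\<forall>c::complex. \<forall>a\<in>I. (\<lambda>x. c * a x) \<in> I) \<and>
     (\<forall>a\<in>l1. \<forall>b\<in>I. conv a b \<in> I \<and> conv b a \<in> I) \<and>
     (\<forall>f\<in>l1. (\<forall>e>0. \<exists>g\<in>I. norm1 (f - g) < e) \<longrightarrow> f \<in> I)"

definition J :: "(cu \<Rightarrow> complex) set" where
  "J = \<Inter> {I. is_closed_ideal I \<and> f0 \<in> I}"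

definition qmap :: "(cu \<Rightarrow> complex) \<Rightarrow> (cu \<Rightarrow> complex) set" where
  "qmap a = {a + j | j. j \<in> J}"

definition quot :: "(cu \<Rightarrow> complex) set set" where
  "quot = qmap ` l1"

definition qnorm :: "(cu \<Rightarrow> complex) \<Rightarrow> real" where
  "qnorm a = Inf {norm1 (a - j) | j. j \<in> J}"

text \<open>l^p(N) with N = {1,2,...} is represented by sequences indexed from 0:
  the sequence x :: nat => complex stands for (x 0, x 1, ...) = (x_1, x_2, ...).\<close>

definition lp :: "real \<Rightarrow> (nat \<Rightarrow> complex) set" where
  "lp p = {x. summable (\<lambda>n. norm (x n) powr p)}"

definition lpnorm :: "real \<Rightarrow> (nat \<Rightarrow> complex) \<Rightarrow> real" where
  "lpnorm p x = (\<Sum>n. norm (x n) powr p) powr (1 / p)"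

definition is_bop :: "real \<Rightarrow> ((nat \<Rightarrow> complex) \<Rightarrow> (nat \<Rightarrow> complex)) \<Rightarrow> bool" where
  "is_bop p T \<longleftrightarrow> (\<forall>x\<in>lp p. T x \<in> lp p) \<and>
     (\<forall>x\<in>lp p. \<forall>y\<in>lp p. T (x + y) = T x + T y) \<and>
     (\<forall>c::complex. \<forall>x\<in>lp p. T (\<lambda>n. c * x n) = (\<lambda>n. c * T x n)) \<and>
     (\<exists>K. \<forall>x\<in>lp p. lpnorm p (T x) \<le> K * lpnorm p x)"

definition opnorm :: "real \<Rightarrow> ((nat \<Rightarrow> complex) \<Rightarrow> (nat \<Rightarrow> complex)) \<Rightarrow> real" where
  "opnorm p T = Sup {lpnorm p (T x) | x. x \<in> lp p \<and> lpnorm p x \<le> 1}"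

text \<open>(A_1 x)(n) = x_(2n), (A_2 x)(n) = x_(2n-1) (1-based), shifted to 0-based indices.\<close>
definition A1 :: "(nat \<Rightarrow> complex) \<Rightarrow> nat \<Rightarrow> complex" where
  "A1 x = (\<lambda>m. x (2 * m + 1))"

definition A2 :: "(nat \<Rightarrow> complex) \<Rightarrow> nat \<Rightarrow> complex" where
  "A2 x = (\<lambda>m. x (2 * m))"

definition Ai :: "gen \<Rightarrow> (nat \<Rightarrow> complex) \<Rightarrow> nat \<Rightarrow> complex" where
  "Ai i = (case i of G1 \<Rightarrow> A1 | G2 \<Rightarrow> A2)"

end

theory Submission
  imports Defs
begin


lemma infsum_single_pt:
  assumes "\<And>z. z \<in> A \<Longrightarrow> z \<noteq> zz \<Longrightarrow> g z = (0::'b::{comm_monoid_add,t2_space})"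
  shows "infsum g A = (if zz \<in> A then g zz else 0)"
proof -
  have "infsum g A = infsum g (A \<inter> {zz})"
    by (rule infsum_cong_neutral) (use assms in auto)
  also have "\<dots> = (if zz \<in> A then g zz else 0)"
    by (cases "zz \<in> A") auto
  finally show ?thesis .
qed

lemma cu_mult_left_s: "cu_mult (u, []) (a, b) = Some (u @ a, b)"
  by (simp add: cu_mult_def)

lemma cu_mult_right_star: "cu_mult (a, b) ([], v) = Some (a, v @ b)"
  by (cases b) (auto simp: cu_mult_def)

lemma conv_delta_delta:
  "conv (delta s) (delta t) = (case cu_mult s t of None \<Rightarrow> 0 | Some x \<Rightarrow> delta x)"
proof
  fix x
  have "conv (delta s) (delta t) x = (if (s,t) \<in> {(s', t'). cu_mult s' t' = Some x} then delta s s * delta t t else 0)"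
    unfolding conv_def
    by (subst infsum_single_pt[where zz="(s,t)"]) (auto simp: delta_def split: if_splits)
  then show "conv (delta s) (delta t) x = (case cu_mult s t of None \<Rightarrow> 0 | Some x \<Rightarrow> delta x) x"
    by (auto simp: delta_def split: option.splits)
qed

lemma conv_right_star:
  "conv f (delta ([], v)) = (\<lambda>(a, c). if (\<exists>r. c = v @ r) then f (a, drop (length v) c) else 0)"
proof
  fix x :: cu
  obtain a c where x: "x = (a, c)" by force
  show "conv f (delta ([], v)) x = (\<lambda>(a, c). if (\<exists>r. c = v @ r) then f (a, drop (length v) c) else 0) x"
  proof (cases "\<exists>r. c = v @ r")
    case True
    then obtain r where r: "c = v @ r" by blast
    have "conv f (delta ([], v)) x = (if ((a, r), ([], v)) \<in> {(s', t'). cu_mult s' t' = Some x} then f (a,r) * delta ([], v) ([], v) else 0)"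
      unfolding conv_def
      by (subst infsum_single_pt[where zz="((a,r),([],v))"])
         (auto simp: delta_def x r cu_mult_right_star split: if_splits)
    then show ?thesis using r x by (simp add: cu_mult_right_star delta_def)
  next
    case False
    have "conv f (delta ([], v)) x = 0"
      unfolding conv_def
      by (rule infsum_0) (use False in \<open>auto simp: delta_def x cu_mult_right_star\<close>)
    then show ?thesis using False x by simp
  qed
qed

lemma conv_left_s:
  "conv (delta (u, [])) f = (\<lambda>(c, b). if (\<exists>r. c = u @ r) then f (drop (length u) c, b) else 0)"
proof
  fix x :: cu
  obtain c b where x: "x = (c, b)" by force
  show "conv (delta (u, [])) f x = (\<lambda>(c, b). if (\<exists>r. c = u @ r) then f (drop (length u) c, b) else 0) x"
  proof (cases "\<exists>r. c = u @ r")
    case True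
    then obtain r where r: "c = u @ r" by blast
    have "conv (delta (u, [])) f x = (if ((u, []), (r, b)) \<in> {(s', t'). cu_mult s' t' = Some x} then delta (u, []) (u, []) * f (r, b) else 0)"
      unfolding conv_def
      by (subst infsum_single_pt[where zz="((u,[]),(r,b))"])
         (auto simp: delta_def x r cu_mult_left_s split: if_splits)
    then show ?thesis using r x by (simp add: cu_mult_left_s delta_def)
  next
    case False
    have "conv (delta (u, [])) f x = 0"
      unfolding conv_def
      by (rule infsum_0) (use False in \<open>auto simp: delta_def x cu_mult_left_s\<close>)
    then show ?thesis using False x by simp
  qed
qed




lemma l1_iff: "a \<in> l1 \<longleftrightarrow> (\<lambda>x. norm (a x)) summable_on UNIV"
  by (simp add: l1_def)

lemma l1_summable: "a \<in> l1 \<Longrightarrow> a summable_on A"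
  unfolding l1_def using abs_summable_summable summable_on_subset_banach
  by (metis mem_Collect_eq subset_UNIV)

lemma l1_abs_summable_on: "a \<in> l1 \<Longrightarrow> (\<lambda>x. norm (a x)) summable_on A"
  unfolding l1_def using summable_on_subset_banach by (metis mem_Collect_eq subset_UNIV)

lemma zero_l1[simp]: "0 \<in> l1"
  by (simp add: l1_def)

lemma delta_l1[simp]: "delta s \<in> l1"
proof -
  have "(\<lambda>x. norm (delta s x)) summable_on UNIV"
    by (rule finite_nonzero_values_imp_summable_on) (auto simp: delta_def)
  then show ?thesis by (simp add: l1_def)
qed

lemma l1_add[simp]: "a \<in> l1 \<Longrightarrow> b \<in> l1 \<Longrightarrow> a + b \<in> l1"
  unfolding l1_def
proof -
  assume a: "a \<in> {f. (\<lambda>x. norm (f x)) summable_on UNIV}" and b: "b \<in> {f. (\<lambda>x. norm (f x)) summable_on UNIV}"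
  have "(\<lambda>x. norm (a x) + norm (b x)) summable_on UNIV"
    using a b by (auto intro: summable_on_add)
  then show "a + b \<in> {f. (\<lambda>x. norm (f x)) summable_on UNIV}"
    by (auto intro!: summable_on_comparison_test[of "\<lambda>x. norm (a x) + norm (b x)"] norm_triangle_ineq)
qed

lemma l1_scal[simp]: "a \<in> l1 \<Longrightarrow> (\<lambda>x. c * a x) \<in> l1"
  unfolding l1_def by (auto simp: norm_mult intro: summable_on_cmult_right)

lemma l1_uminus[simp]: "a \<in> l1 \<Longrightarrow> - a \<in> l1"
  unfolding l1_def by auto

lemma l1_diff[simp]: "a \<in> l1 \<Longrightarrow> b \<in> l1 \<Longrightarrow> a - b \<in> l1"
  using l1_add[of a "-b"] by (simp add: l1_uminus)

lemma l1_sum: "finite F \<Longrightarrow> (\<And>t. t \<in> F \<Longrightarrow> f t \<in> l1) \<Longrightarrow> sum f F \<in> l1"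
  by (induction F rule: finite_induct) auto

lemma l1_fin_supp: "finite {x. a x \<noteq> 0} \<Longrightarrow> a \<in> l1"
  unfolding l1_def by (auto intro: finite_nonzero_values_imp_summable_on)

lemma norm1_nonneg: "norm1 a \<ge> 0"
  unfolding norm1_def by (rule infsum_nonneg) auto

lemma norm1_triangle:
  assumes "a \<in> l1" "b \<in> l1"
  shows "norm1 (a + b) \<le> norm1 a + norm1 b"
proof -
  have "norm1 (a + b) \<le> infsum (\<lambda>x. norm (a x) + norm (b x)) UNIV"
    unfolding norm1_def
    by (rule infsum_mono) (use assms l1_add in \<open>auto simp: l1_def intro: norm_triangle_ineq summable_on_add\<close>)
  also have "\<dots> = norm1 a + norm1 b"
    unfolding norm1_def by (rule infsum_add) (use assms in \<open>auto simp: l1_def\<close>)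
  finally show ?thesis .
qed

definition LL :: "(cu \<Rightarrow> complex) \<Rightarrow> (cu \<Rightarrow> complex) \<Rightarrow> complex" where
  "LL ch a = infsum (\<lambda>t. a t * ch t) UNIV"

lemma bounded_prod_abs_summable:
  assumes "a \<in> l1" "\<And>t. norm (ch t) \<le> 1"
  shows "(\<lambda>t. norm (a t * ch t)) summable_on A"
proof -
  have "(\<lambda>t. norm (a t)) summable_on A" using assms(1) l1_abs_summable_on by blast
  then show ?thesis
    by (rule summable_on_comparison_test)
       (use assms(2) in \<open>auto simp: norm_mult intro: mult_left_le[of _ "norm (a _)"]\<close>)
qed

lemma bounded_prod_summable:
  assumes "a \<in> l1" "\<And>t. norm (ch t) \<le> 1"
  shows "(\<lambda>t. a t * ch t) summable_on A"
  by (rule abs_summable_summable) (rule bounded_prod_abs_summable[OF assms])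

lemma LL_bound:
  assumes "a \<in> l1" "\<And>t. norm (ch t) \<le> 1"
  shows "norm (LL ch a) \<le> norm1 a"
proof -
  have "norm (LL ch a) \<le> infsum (\<lambda>t. norm (a t * ch t)) UNIV"
    unfolding LL_def by (rule norm_infsum_bound) (rule bounded_prod_abs_summable[OF assms])
  also have "\<dots> \<le> norm1 a"
    unfolding norm1_def
    by (rule infsum_mono) (use assms bounded_prod_abs_summable[OF assms] in
       \<open>auto simp: l1_def norm_mult intro: mult_left_le\<close>)
  finally show ?thesis .
qed

lemma LL_add:
  assumes "a \<in> l1" "b \<in> l1" "\<And>t. norm (ch t) \<le> 1"
  shows "LL ch (a + b) = LL ch a + LL ch b"
  unfolding LL_def
  using infsum_add[OF bounded_prod_summable[OF assms(1,3)] bounded_prod_summable[OF assms(2,3)]]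
  by (simp add: distrib_right)

lemma LL_scal:
  "LL ch (\<lambda>x. c * a x) = c * LL ch a"
  unfolding LL_def by (simp add: mult.assoc infsum_cmult_right')

lemma LL_uminus: "LL ch (- a) = - LL ch a"
  unfolding LL_def by (simp add: infsum_uminus)

lemma LL_diff:
  assumes "a \<in> l1" "b \<in> l1" "\<And>t. norm (ch t) \<le> 1"
  shows "LL ch (a - b) = LL ch a - LL ch b"
  using LL_add[of a "-b" ch] assms by (simp add: LL_uminus)

lemma LL_fin:
  assumes "finite F" "\<And>x. x \<notin> F \<Longrightarrow> a x = 0"
  shows "LL ch a = (\<Sum>t\<in>F. a t * ch t)"
proof -
  have "LL ch a = infsum (\<lambda>t. a t * ch t) F"
    unfolding LL_def by (rule infsum_cong_neutral) (use assms in auto)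
  then show ?thesis using assms by simp
qed

lemma norm1_fin:
  assumes "finite F" "\<And>x. x \<notin> F \<Longrightarrow> a x = 0"
  shows "norm1 a = (\<Sum>t\<in>F. norm (a t))"
proof -
  have "norm1 a = infsum (\<lambda>t. norm (a t)) F"
    unfolding norm1_def by (rule infsum_cong_neutral) (use assms in auto)
  then show ?thesis using assms by simp
qed

lemma tail_small:
  assumes "a \<in> l1" "e > 0"
  shows "\<exists>F. finite F \<and> infsum (\<lambda>t. norm (a t)) (- F) < e"
proof -
  have s: "(\<lambda>t. norm (a t)) summable_on UNIV" using assms l1_def by auto
  obtain F where F: "finite F" "dist (sum (\<lambda>t. norm (a t)) F) (infsum (\<lambda>t. norm (a t)) UNIV) \<le> e/2"
    using infsum_finite_approximation[OF s, of "e/2"] assms by auto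
  have "infsum (\<lambda>t. norm (a t)) UNIV = infsum (\<lambda>t. norm (a t)) F + infsum (\<lambda>t. norm (a t)) (- F)"
    using infsum_Un_disjoint[of "\<lambda>t. norm (a t)" F "-F"] s F(1)
    using l1_abs_summable_on[OF assms(1)] by (simp add: Compl_partition)
  then show ?thesis using F assms by (auto simp: dist_real_def)
qed

lemma tail_mono:
  assumes "a \<in> l1" "D \<subseteq> E"
  shows "infsum (\<lambda>t. norm (a t)) D \<le> infsum (\<lambda>t. norm (a t)) E"
  by (rule infsum_mono_neutral) (use assms l1_abs_summable_on in auto)




lemma J_intro: "(\<And>I. is_closed_ideal I \<Longrightarrow> f0 \<in> I \<Longrightarrow> x \<in> I) \<Longrightarrow> x \<in> J"
  unfolding J_def by blast

lemma J_mem: "x \<in> J \<Longrightarrow> is_closed_ideal I \<Longrightarrow> f0 \<in> I \<Longrightarrow> x \<in> I"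
  unfolding J_def by blast

lemma f0_J: "f0 \<in> J" by (rule J_intro)

lemma zero_J: "0 \<in> J" by (rule J_intro) (simp add: is_closed_ideal_def)

lemma J_add: "a \<in> J \<Longrightarrow> b \<in> J \<Longrightarrow> a + b \<in> J"
proof (rule J_intro)
  fix I assume "a \<in> J" "b \<in> J" "is_closed_ideal I" "f0 \<in> I"
  then have "a \<in> I" "b \<in> I" "is_closed_ideal I" using J_mem by auto
  then show "a + b \<in> I" unfolding is_closed_ideal_def by blast
qed

lemma J_scal: "a \<in> J \<Longrightarrow> (\<lambda>x. c * a x) \<in> J"
proof (rule J_intro)
  fix I assume "a \<in> J" "is_closed_ideal I" "f0 \<in> I"
  then have "a \<in> I" "is_closed_ideal I" using J_mem by auto
  then show "(\<lambda>x. c * a x) \<in> I" unfolding is_closed_ideal_def by blast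
qed

lemma J_uminus': "a \<in> J \<Longrightarrow> - a \<in> J"
proof -
  assume "a \<in> J"
  then have "(\<lambda>x. (-1) * a x) \<in> J" by (rule J_scal)
  moreover have "(\<lambda>x. (-1) * a x) = - a" by auto
  ultimately show ?thesis by simp
qed

lemma J_diff: "a \<in> J \<Longrightarrow> b \<in> J \<Longrightarrow> a - b \<in> J"
  using J_add[of a "-b"] J_uminus' by simp

lemma J_sum: "finite F \<Longrightarrow> (\<And>t. t \<in> F \<Longrightarrow> f t \<in> J) \<Longrightarrow> sum f F \<in> J"
  by (induction F rule: finite_induct) (auto intro: J_add zero_J)

lemma J_conv_left: "a \<in> l1 \<Longrightarrow> b \<in> J \<Longrightarrow> conv a b \<in> J"
proof (rule J_intro)
  fix I assume "a \<in> l1" "b \<in> J" "is_closed_ideal I" "f0 \<in> I"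
  then have "a \<in> l1" "b \<in> I" "is_closed_ideal I" using J_mem by auto
  then show "conv a b \<in> I" unfolding is_closed_ideal_def by blast
qed

lemma J_conv_right: "a \<in> l1 \<Longrightarrow> b \<in> J \<Longrightarrow> conv b a \<in> J"
proof (rule J_intro)
  fix I assume "a \<in> l1" "b \<in> J" "is_closed_ideal I" "f0 \<in> I"
  then have "a \<in> l1" "b \<in> I" "is_closed_ideal I" using J_mem by auto
  then show "conv b a \<in> I" unfolding is_closed_ideal_def by blast
qed

lemma J_closed:
  assumes "a \<in> l1" "\<And>e. e > 0 \<Longrightarrow> \<exists>g\<in>J. norm1 (a - g) < e"
  shows "a \<in> J"
proof (rule J_intro)
  fix I assume I: "is_closed_ideal I" "f0 \<in> I"
  have "\<forall>e>0. \<exists>g\<in>I. norm1 (a - g) < e"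
    using assms(2) J_mem[OF _ I] by blast
  then show "a \<in> I" using I assms(1) unfolding is_closed_ideal_def by blast
qed

lemma qmap_eq: "a - b \<in> J \<Longrightarrow> qmap a = qmap b"
proof -
  assume d: "a - b \<in> J"
  have "{a + j |j. j \<in> J} = {b + j |j. j \<in> J}"
  proof (intro set_eqI iffI)
    fix x assume "x \<in> {a + j |j. j \<in> J}"
    then obtain j where j: "j \<in> J" "x = a + j" by blast
    then have "x = b + ((a - b) + j)" by (simp add: algebra_simps)
    then show "x \<in> {b + j |j. j \<in> J}" using J_add[OF d j(1)] by blast
  next
    fix x assume "x \<in> {b + j |j. j \<in> J}"
    then obtain j where j: "j \<in> J" "x = b + j" by blast
    then have "x = a + (j - (a - b))" by (simp add: algebra_simps)
    then show "x \<in> {a + j |j. j \<in> J}" using J_diff[OF j(1) d] by blast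
  qed
  then show ?thesis by (simp add: qmap_def)
qed

lemma qnorm_le: "a \<in> l1 \<Longrightarrow> qnorm a \<le> norm1 a"
  unfolding qnorm_def
  by (rule cInf_lower) (auto intro!: bdd_belowI[of _ 0] norm1_nonneg zero_J exI[of _ 0])

definition gg :: "gen list \<Rightarrow> gen list \<Rightarrow> cu \<Rightarrow> complex" where
  "gg u v = delta (u, v) - delta (u @ [G1], v @ [G1]) - delta (u @ [G2], v @ [G2])"

lemma gg_conv: "gg u v = conv (delta (u, [])) (conv f0 (delta ([], v)))"
proof
  fix x :: cu
  obtain c d where x: "x = (c, d)" by force
  show "gg u v x = conv (delta (u, [])) (conv f0 (delta ([], v))) x"
    unfolding conv_left_s conv_right_star x gg_def f0_def cu_e_def
    by (auto simp: delta_def)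
qed

lemma gg_J: "gg u v \<in> J"
  unfolding gg_conv by (intro J_conv_left J_conv_right delta_l1 f0_J)

fun RR :: "nat \<Rightarrow> cu \<Rightarrow> cu \<Rightarrow> complex" where
  "RR 0 t = delta t"
| "RR (Suc l) (u, v) = RR l (u @ [G1], v @ [G1]) + RR l (u @ [G2], v @ [G2])"

lemma RR_J: "delta t - RR l t \<in> J"
proof (induction l arbitrary: t)
  case 0 then show ?case using zero_J by (simp add: zero_fun_def)
next
  case (Suc l)
  obtain u v where t: "t = (u, v)" by force
  have "delta t - RR (Suc l) t = gg u v + (delta (u @ [G1], v @ [G1]) - RR l (u @ [G1], v @ [G1]))
      + (delta (u @ [G2], v @ [G2]) - RR l (u @ [G2], v @ [G2]))"
    by (simp add: t gg_def algebra_simps)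
  then show ?case using Suc gg_J by (metis J_add)
qed

lemma gen_cases': "(g::gen) = G1 \<or> g = G2" by (cases g) auto

lemma RR_val: "RR l (u, v) (x, y) = (if \<exists>w. length w = l \<and> x = u @ w \<and> y = v @ w then 1 else 0)"
proof (induction l arbitrary: u v)
  case 0 then show ?case by (auto simp: delta_def)
next
  case (Suc l)
  have A: "(\<exists>w. length w = Suc l \<and> x = u @ w \<and> y = v @ w) \<longleftrightarrow>
     ((\<exists>w. length w = l \<and> x = (u @ [G1]) @ w \<and> y = (v @ [G1]) @ w) \<or>
      (\<exists>w. length w = l \<and> x = (u @ [G2]) @ w \<and> y = (v @ [G2]) @ w))"
  proof
    assume "\<exists>w. length w = Suc l \<and> x = u @ w \<and> y = v @ w"
    then obtain g w where "length w = l" "x = u @ g # w" "y = v @ g # w"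
      by (metis length_Suc_conv)
    then show "((\<exists>w. length w = l \<and> x = (u @ [G1]) @ w \<and> y = (v @ [G1]) @ w) \<or>
      (\<exists>w. length w = l \<and> x = (u @ [G2]) @ w \<and> y = (v @ [G2]) @ w))"
      using gen_cases'[of g] by auto
  next
    assume "((\<exists>w. length w = l \<and> x = (u @ [G1]) @ w \<and> y = (v @ [G1]) @ w) \<or>
      (\<exists>w. length w = l \<and> x = (u @ [G2]) @ w \<and> y = (v @ [G2]) @ w))"
    then show "\<exists>w. length w = Suc l \<and> x = u @ w \<and> y = v @ w"
      by (metis append_Cons append_assoc length_Cons self_append_conv2)
  qed
  have B: "\<not> ((\<exists>w. length w = l \<and> x = (u @ [G1]) @ w \<and> y = (v @ [G1]) @ w) \<and>
      (\<exists>w. length w = l \<and> x = (u @ [G2]) @ w \<and> y = (v @ [G2]) @ w))"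
    by auto
  show ?case using A B Suc[of "u @ [G1]" "v @ [G1]"] Suc[of "u @ [G2]" "v @ [G2]"]
    by (auto simp del: append_assoc)
qed




definition ee :: "nat \<Rightarrow> nat \<Rightarrow> complex" where "ee n = (\<lambda>i. if i = n then 1 else 0)"

lemma lpnorm_nonneg: "lpnorm p x \<ge> 0"
  unfolding lpnorm_def by simp

lemma ee_lp: "p > 0 \<Longrightarrow> ee n \<in> lp p"
proof -
  assume p: "p > 0"
  have "(\<lambda>i. norm (ee n i) powr p) = (\<lambda>i. if i = n then 1 else 0)"
    using p by (auto simp: ee_def)
  then show ?thesis unfolding lp_def by (simp add: summable_If_finite)
qed

lemma ee_norm: "p > 0 \<Longrightarrow> lpnorm p (ee n) = 1"
proof -
  assume p: "p > 0"
  have "(\<lambda>i. norm (ee n i) powr p) = (\<lambda>i. if i = n then 1 else 0)"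
    using p by (auto simp: ee_def)
  moreover have "(\<Sum>i. (if i = n then 1 else 0::real)) = 1"
    using suminf_finite[of "{n}" "\<lambda>i. if i = n then 1 else 0::real"] by simp
  ultimately show ?thesis unfolding lpnorm_def by simp
qed

lemma zero_lp: "p > 0 \<Longrightarrow> (0::nat\<Rightarrow>complex) \<in> lp p"
  unfolding lp_def by simp

lemma zero_lpnorm: "p > 0 \<Longrightarrow> lpnorm p 0 = 0"
  unfolding lpnorm_def by simp

lemma coord_le_lpnorm:
  assumes p: "p > 0" and y: "y \<in> lp p"
  shows "norm (y m) \<le> lpnorm p y"
proof -
  have s: "summable (\<lambda>n. norm (y n) powr p)" using y by (simp add: lp_def)
  have h: "norm (y m) powr p \<le> (\<Sum>n. norm (y n) powr p)"
    using sum_le_suminf[OF s, of "{m}"] by simp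
  have "(norm (y m) powr p) powr (1/p) \<le> (\<Sum>n. norm (y n) powr p) powr (1/p)"
    using h p by (auto intro: powr_mono2)
  then show ?thesis using p by (simp add: powr_powr lpnorm_def)
qed

lemma opnorm_upper:
  assumes p: "p > 0" and T: "is_bop p T" and x: "x \<in> lp p" "lpnorm p x \<le> 1"
  shows "lpnorm p (T x) \<le> opnorm p T"
proof -
  obtain K where K: "\<forall>x\<in>lp p. lpnorm p (T x) \<le> K * lpnorm p x"
    using T unfolding is_bop_def by blast
  have B: "bdd_above {lpnorm p (T x) | x. x \<in> lp p \<and> lpnorm p x \<le> 1}"
  proof (rule bdd_aboveI[of _ "\<bar>K\<bar>"])
    fix r assume "r \<in> {lpnorm p (T x) | x. x \<in> lp p \<and> lpnorm p x \<le> 1}"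
    then obtain z where z: "z \<in> lp p" "lpnorm p z \<le> 1" "r = lpnorm p (T z)" by blast
    have "K * lpnorm p z \<le> \<bar>K\<bar> * lpnorm p z" by (simp add: lpnorm_nonneg mult_right_mono)
    also have "\<dots> \<le> \<bar>K\<bar>" using z(2) lpnorm_nonneg[of p z] by (simp add: mult_left_le)
    finally show "r \<le> \<bar>K\<bar>" using K z by force
  qed
  show ?thesis unfolding opnorm_def using B x by (auto intro!: cSup_upper)
qed

lemma opnorm_least:
  assumes p: "p > 0" and "\<And>x. x \<in> lp p \<Longrightarrow> lpnorm p x \<le> 1 \<Longrightarrow> lpnorm p (T x) \<le> C"
  shows "opnorm p T \<le> C"
  unfolding opnorm_def
  by (rule cSup_least) (use assms zero_lp[OF p] zero_lpnorm[OF p] in \<open>auto intro!: exI[of _ 0]\<close>)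

lemma opnorm_cong:
  assumes "\<And>x. x \<in> lp p \<Longrightarrow> T x = T' x"
  shows "opnorm p T = opnorm p T'"
  unfolding opnorm_def using assms by metis

definition step :: "gen \<Rightarrow> nat \<Rightarrow> nat" where
  "step g k = (case g of G1 \<Rightarrow> 2 * k + 1 | G2 \<Rightarrow> 2 * k)"

lemma Ai_step: "Ai g x = (\<lambda>m. x (step g m))"
  by (cases g) (auto simp: Ai_def A1_def A2_def step_def)

definition pre :: "gen \<Rightarrow> (nat \<Rightarrow> complex) \<Rightarrow> nat \<Rightarrow> complex" where
  "pre g x = (\<lambda>i. if i \<in> range (step g) then x (i div 2) else 0)"

lemma step_strict_mono: "strict_mono (step g)"
  by (cases g) (auto simp: strict_mono_def step_def)

lemma step_div: "step g k div 2 = k"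
  by (cases g) (auto simp: step_def)

lemma pre_step: "pre g x (step g k) = x k"
  by (auto simp: pre_def step_div)

lemma Ai_pre: "Ai g (pre g x) = x"
  by (auto simp: Ai_step pre_step)

lemma step_disj: "g \<noteq> g' \<Longrightarrow> step g k \<noteq> step g' k'"
  by (cases g; cases g') (auto simp: step_def, presburger+)

lemma Ai_pre_other: "g \<noteq> g' \<Longrightarrow> Ai g' (pre g x) = 0"
proof -
  assume "g \<noteq> g'"
  then have "\<And>m. step g' m \<notin> range (step g)" using step_disj by (metis imageE)
  then show ?thesis by (auto simp: Ai_step pre_def)
qed

lemma pre_lp:
  assumes p: "p > 0" and x: "x \<in> lp p"
  shows "pre g x \<in> lp p"
proof -
  have "summable (\<lambda>n. norm (pre g x (step g n)) powr p) \<longleftrightarrow> summable (\<lambda>i. norm (pre g x i) powr p)"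
    by (rule summable_mono_reindex[OF step_strict_mono]) (use p in \<open>auto simp: pre_def\<close>)
  then show ?thesis using x by (simp add: lp_def pre_step)
qed




fun idx :: "gen list \<Rightarrow> nat \<Rightarrow> nat" where
  "idx [] k = k"
| "idx (g # v) k = step g (idx v k)"

fun Uf :: "gen list \<Rightarrow> (nat \<Rightarrow> complex) \<Rightarrow> nat \<Rightarrow> complex" where
  "Uf [] x = x"
| "Uf (g # u) x = pre g (Uf u x)"

locale Th =
  fixes p :: real
    and \<Theta> :: "(cu \<Rightarrow> complex) set \<Rightarrow> (nat \<Rightarrow> complex) \<Rightarrow> nat \<Rightarrow> complex"
  assumes p: "p \<ge> 1"
    and bop: "\<forall>X\<in>quot. is_bop p (\<Theta> X)"
    and hom_add: "\<forall>a\<in>l1. \<forall>b\<in>l1. \<forall>x\<in>lp p.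
        \<Theta> (qmap (a + b)) x = \<Theta> (qmap a) x + \<Theta> (qmap b) x"
    and hom_scal: "\<forall>c::complex. \<forall>a\<in>l1. \<forall>x\<in>lp p.
        \<Theta> (qmap (\<lambda>s. c * a s)) x = (\<lambda>n. c * \<Theta> (qmap a) x n)"
    and hom_mult: "\<forall>a\<in>l1. \<forall>b\<in>l1. \<forall>x\<in>lp p.
        \<Theta> (qmap (conv a b)) x = \<Theta> (qmap a) (\<Theta> (qmap b) x)"
    and cont: "\<forall>a\<in>l1. \<forall>e>0. \<exists>d>0. \<forall>b\<in>l1.
        qnorm (b - a) < d \<longrightarrow> opnorm p (\<lambda>x. \<Theta> (qmap b) x - \<Theta> (qmap a) x) < e"
    and gens: "\<forall>i. \<forall>x\<in>lp p. \<Theta> (qmap (delta (cu_star i))) x = Ai i x"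
begin

lemma pp: "p > 0" using p by simp

lemma qmap_quot: "a \<in> l1 \<Longrightarrow> qmap a \<in> quot"
  by (simp add: quot_def)

lemma Th_bop: "a \<in> l1 \<Longrightarrow> is_bop p (\<Theta> (qmap a))"
  using bop qmap_quot by blast

lemma Th_lp: "a \<in> l1 \<Longrightarrow> x \<in> lp p \<Longrightarrow> \<Theta> (qmap a) x \<in> lp p"
  using Th_bop unfolding is_bop_def by blast

lemma Th_zero_vec: "a \<in> l1 \<Longrightarrow> \<Theta> (qmap a) 0 = 0"
proof -
  assume a: "a \<in> l1"
  have "\<Theta> (qmap a) (\<lambda>n. 0 * (0::nat\<Rightarrow>complex) n) = (\<lambda>n. 0 * \<Theta> (qmap a) 0 n)"
    using Th_bop[OF a] zero_lp[OF pp] unfolding is_bop_def by blast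
  then show ?thesis by (simp add: zero_fun_def)
qed

lemma Th_zero: "x \<in> lp p \<Longrightarrow> \<Theta> (qmap 0) x = 0"
proof -
  assume x: "x \<in> lp p"
  have "\<Theta> (qmap (\<lambda>s. 0 * (0::cu\<Rightarrow>complex) s)) x = (\<lambda>n. 0 * \<Theta> (qmap 0) x n)"
    using hom_scal x zero_l1 by blast
  then show ?thesis by (simp add: zero_fun_def)
qed

lemma Th_J: "j \<in> J \<Longrightarrow> x \<in> lp p \<Longrightarrow> \<Theta> (qmap j) x = 0"
  using qmap_eq[of j 0] Th_zero by simp

lemma Th_add: "a \<in> l1 \<Longrightarrow> b \<in> l1 \<Longrightarrow> x \<in> lp p \<Longrightarrow> \<Theta> (qmap (a + b)) x = \<Theta> (qmap a) x + \<Theta> (qmap b) x"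
  using hom_add by blast

lemma Th_scal: "a \<in> l1 \<Longrightarrow> x \<in> lp p \<Longrightarrow> \<Theta> (qmap (\<lambda>s. c * a s)) x = (\<lambda>n. c * \<Theta> (qmap a) x n)"
  using hom_scal by blast

lemma Th_mult: "a \<in> l1 \<Longrightarrow> b \<in> l1 \<Longrightarrow> x \<in> lp p \<Longrightarrow> \<Theta> (qmap (conv a b)) x = \<Theta> (qmap a) (\<Theta> (qmap b) x)"
  using hom_mult by blast

lemma Th_diff: "a \<in> l1 \<Longrightarrow> b \<in> l1 \<Longrightarrow> x \<in> lp p \<Longrightarrow> \<Theta> (qmap (a - b)) x = \<Theta> (qmap a) x - \<Theta> (qmap b) x"
  using Th_add[of "a - b" b x] by simp

lemma Th_sum: "finite F \<Longrightarrow> (\<And>t. t \<in> F \<Longrightarrow> f t \<in> l1) \<Longrightarrow> x \<in> lp p \<Longrightarrow>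
   \<Theta> (qmap (sum f F)) x = (\<Sum>t\<in>F. \<Theta> (qmap (f t)) x)"
proof (induction F rule: finite_induct)
  case empty then show ?case using Th_zero[of x] by (simp add: zero_fun_def)
next
  case (insert t F)
  have "\<Theta> (qmap (f t + sum f F)) x = \<Theta> (qmap (f t)) x + \<Theta> (qmap (sum f F)) x"
    using insert Th_add[of "f t" "sum f F" x] l1_sum[of F f] by blast
  moreover have "\<Theta> (qmap (sum f F)) x = (\<Sum>t\<in>F. \<Theta> (qmap (f t)) x)" using insert by blast
  ultimately show ?case by (simp only: sum.insert[OF insert(1,2)])
qed

lemma Th_gen: "x \<in> lp p \<Longrightarrow> \<Theta> (qmap (delta ([], [g]))) x = Ai g x"
  using gens by (simp add: cu_star_def)

lemma Ai_lp: "x \<in> lp p \<Longrightarrow> Ai g x \<in> lp p"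
  using Th_gen Th_lp[OF delta_l1] by metis

lemma Th_e: "x \<in> lp p \<Longrightarrow> \<Theta> (qmap (delta ([], []))) x = x"
proof -
  assume x: "x \<in> lp p"
  have c: "conv (delta ([], [])) (delta ([], [G1])) = delta ([], [G1])"
    by (simp add: conv_delta_delta cu_mult_right_star)
  have y: "pre G1 x \<in> lp p" using pre_lp[OF pp x] .
  have "\<Theta> (qmap (delta ([], []))) (\<Theta> (qmap (delta ([], [G1]))) (pre G1 x)) = \<Theta> (qmap (delta ([], [G1]))) (pre G1 x)"
    using Th_mult[of "delta ([], [])" "delta ([], [G1])" "pre G1 x"] y c by simp
  then show ?thesis using Th_gen[OF y] Ai_pre by simp
qed

lemma Th_V: "x \<in> lp p \<Longrightarrow> \<Theta> (qmap (delta ([], v))) x = (\<lambda>m. x (idx v m))"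
proof (induction v arbitrary: x)
  case Nil then show ?case using Th_e by simp
next
  case (Cons g v)
  have c: "conv (delta ([], v)) (delta ([], [g])) = delta ([], g # v)"
    by (simp add: conv_delta_delta cu_mult_right_star)
  have "\<Theta> (qmap (delta ([], g # v))) x = \<Theta> (qmap (delta ([], v))) (\<Theta> (qmap (delta ([], [g]))) x)"
    using Th_mult[of "delta ([], v)" "delta ([], [g])" x] Cons.prems c by simp
  also have "\<dots> = \<Theta> (qmap (delta ([], v))) (Ai g x)" using Th_gen Cons.prems by simp
  also have "\<dots> = (\<lambda>m. Ai g x (idx v m))" using Cons.IH Ai_lp Cons.prems by simp
  finally show ?case by (simp add: Ai_step)
qed

lemma Th_gg_split: "x \<in> lp p \<Longrightarrow> \<Theta> (qmap (delta ([g], [g]))) x = \<Theta> (qmap (delta ([g], []))) (Ai g x)"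
proof -
  assume x: "x \<in> lp p"
  have c: "conv (delta ([g], [])) (delta ([], [g])) = delta ([g], [g])"
    by (simp add: conv_delta_delta cu_mult_left_s)
  show ?thesis using Th_mult[of "delta ([g], [])" "delta ([], [g])" x] x c Th_gen by simp
qed

lemma Th_decomp: "x \<in> lp p \<Longrightarrow> x = \<Theta> (qmap (delta ([G1], []))) (Ai G1 x) + \<Theta> (qmap (delta ([G2], []))) (Ai G2 x)"
proof -
  assume x: "x \<in> lp p"
  have e: "delta ([], []) = f0 + (delta ([G1], [G1]) + delta ([G2], [G2]))"
    by (simp add: f0_def cu_e_def)
  have "x = \<Theta> (qmap (delta ([], []))) x" using Th_e x by simp
  also have "\<dots> = \<Theta> (qmap f0) x + (\<Theta> (qmap (delta ([G1], [G1]))) x + \<Theta> (qmap (delta ([G2], [G2]))) x)"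
  proof -
    have f: "f0 \<in> l1" by (simp add: f0_def)
    show ?thesis unfolding e using x Th_add[OF f _ x, of "delta ([G1], [G1]) + delta ([G2], [G2])"]
      Th_add[OF delta_l1 delta_l1 x] by simp
  qed
  also have "\<dots> = \<Theta> (qmap (delta ([G1], [G1]))) x + \<Theta> (qmap (delta ([G2], [G2]))) x"
    using Th_J[OF f0_J x] by simp
  finally show ?thesis using Th_gg_split x by simp
qed

lemma Th_S: "x \<in> lp p \<Longrightarrow> \<Theta> (qmap (delta ([g], []))) x = pre g x"
proof -
  assume x: "x \<in> lp p"
  have y: "pre g x \<in> lp p" using pre_lp[OF pp x] .
  have "pre g x = \<Theta> (qmap (delta ([G1], []))) (Ai G1 (pre g x)) + \<Theta> (qmap (delta ([G2], []))) (Ai G2 (pre g x))"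
    using Th_decomp[OF y] .
  then show ?thesis
    by (cases g) (auto simp: Ai_pre Ai_pre_other Th_zero_vec)
qed

end




lemma step_inj: "step g a = step g b \<Longrightarrow> a = b"
  using step_div by metis

lemma idx_inj: "idx u k = idx u k' \<Longrightarrow> k = k'"
  by (induction u) (auto dest: step_inj)

lemma Uf_idx: "Uf u y (idx u k) = y k"
  by (induction u arbitrary: k) (auto simp: pre_step)

lemma Uf_out: "m \<notin> range (idx u) \<Longrightarrow> Uf u y m = 0"
proof (induction u arbitrary: m)
  case Nil then show ?case by simp
next
  case (Cons g u)
  show ?case
  proof (cases "m \<in> range (step g)")
    case True
    then obtain j where j: "m = step g j" by blast
    have "j \<notin> range (idx u)" using Cons.prems j by auto
    then show ?thesis using Cons.IH j by (simp add: pre_step)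
  next
    case False then show ?thesis by (simp add: pre_def)
  qed
qed

lemma Uf_lp: "y \<in> lp p \<Longrightarrow> p > 0 \<Longrightarrow> Uf u y \<in> lp p"
  by (induction u) (auto intro: pre_lp)

lemma mult_ind: "(a::complex) * (if P then 1 else 0) = (if P then a else 0)"
  by simp

lemma sum_fun_apply: "(sum f F) x = (\<Sum>t\<in>F. f t x)"
  by (induction F rule: infinite_finite_induct) auto

definition chi :: "nat \<Rightarrow> nat \<Rightarrow> cu \<Rightarrow> complex" where
  "chi n m t = (if \<exists>k. idx (fst t) k = m \<and> idx (snd t) k = n then 1 else 0)"

lemma chi_bound: "norm (chi n m t) \<le> 1"
  by (simp add: chi_def)

lemma dense_eq:
  fixes x y :: complex
  assumes "\<And>e. e > 0 \<Longrightarrow> norm (x - y) < 2 * e"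
  shows "x = y"
proof (rule ccontr)
  assume "x \<noteq> y"
  then have "norm (x - y) > 0" by simp
  from assms[OF half_gt_zero[OF this]] show False by simp
qed

context Th begin

lemma Th_U: "x \<in> lp p \<Longrightarrow> \<Theta> (qmap (delta (u, []))) x = Uf u x"
proof (induction u arbitrary: x)
  case Nil then show ?case using Th_e by simp
next
  case (Cons g u)
  have c: "conv (delta ([g], [])) (delta (u, [])) = delta (g # u, [])"
    by (simp add: conv_delta_delta cu_mult_left_s)
  have "\<Theta> (qmap (delta (g # u, []))) x = \<Theta> (qmap (delta ([g], []))) (\<Theta> (qmap (delta (u, []))) x)"
    using Th_mult[of "delta ([g], [])" "delta (u, [])" x] Cons.prems c by simp
  also have "\<dots> = pre g (Uf u x)" using Cons Th_S Uf_lp pp by simp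
  finally show ?case by simp
qed

lemma Th_mono: "x \<in> lp p \<Longrightarrow> \<Theta> (qmap (delta (u, v))) x = Uf u (\<lambda>m. x (idx v m))"
proof -
  assume x: "x \<in> lp p"
  have c: "conv (delta (u, [])) (delta ([], v)) = delta (u, v)"
    by (simp add: conv_delta_delta cu_mult_left_s)
  have "\<Theta> (qmap (delta (u, v))) x = \<Theta> (qmap (delta (u, []))) (\<Theta> (qmap (delta ([], v))) x)"
    using Th_mult[of "delta (u, [])" "delta ([], v)" x] x c by simp
  also have "\<dots> = Uf u (\<lambda>m. x (idx v m))"
    using Th_U Th_V x Th_lp[OF delta_l1 x, of "([], v)"] by simp
  finally show ?thesis .
qed

lemma Th_entry_delta: "\<Theta> (qmap (delta t)) (ee n) m = chi n m t"
proof -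
  obtain u v where t: "t = (u, v)" by force
  have e: "\<Theta> (qmap (delta t)) (ee n) m = Uf u (\<lambda>m. ee n (idx v m)) m"
    using Th_mono[OF ee_lp[OF pp]] t by simp
  show ?thesis
  proof (cases "m \<in> range (idx u)")
    case True
    then obtain k where k: "m = idx u k" by blast
    have "(\<exists>k'. idx u k' = m \<and> idx v k' = n) \<longleftrightarrow> idx v k = n"
      using k idx_inj by metis
    then show ?thesis using e k by (simp add: Uf_idx chi_def t ee_def)
  next
    case False
    then show ?thesis using e by (auto simp: Uf_out chi_def t)
  qed
qed

lemma Th_entry_fin:
  assumes "finite F"
  shows "\<Theta> (qmap (\<lambda>s. if s \<in> F then a s else 0)) (ee n) m = (\<Sum>t\<in>F. a t * chi n m t)"
proof -
  have eq: "(\<lambda>s. if s \<in> F then a s else 0) = (\<Sum>t\<in>F. (\<lambda>s. a t * delta t s))"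
    using assms by (auto simp: delta_def fun_eq_iff sum_fun_apply mult_ind sum.delta sum.delta')
  have "\<Theta> (qmap (\<Sum>t\<in>F. (\<lambda>s. a t * delta t s))) (ee n) = (\<Sum>t\<in>F. \<Theta> (qmap (\<lambda>s. a t * delta t s)) (ee n))"
    by (rule Th_sum) (use assms ee_lp pp in auto)
  also have "\<dots> = (\<Sum>t\<in>F. (\<lambda>i. a t * \<Theta> (qmap (delta t)) (ee n) i))"
    using Th_scal[OF delta_l1 ee_lp[OF pp]] by simp
  finally show ?thesis unfolding eq by (simp add: Th_entry_delta sum_fun_apply)
qed

lemma Th_entry:
  assumes a: "a \<in> l1"
  shows "\<Theta> (qmap a) (ee n) m = LL (chi n m) a"
proof (rule dense_eq)
  fix e :: real assume e: "e > 0"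
  obtain d where d: "d > 0" "\<forall>b\<in>l1. qnorm (b - a) < d \<longrightarrow> opnorm p (\<lambda>x. \<Theta> (qmap b) x - \<Theta> (qmap a) x) < e"
    using cont a e by blast
  obtain F where F: "finite F" "infsum (\<lambda>t. norm (a t)) (- F) < min d e"
    using tail_small[OF a, of "min d e"] d e by auto
  define aF where "aF = (\<lambda>s. if s \<in> F then a s else 0)"
  have aF: "aF \<in> l1" unfolding aF_def by (rule l1_fin_supp) (use F(1) in \<open>auto intro: finite_subset\<close>)
  have n1: "norm1 (aF - a) = infsum (\<lambda>t. norm (a t)) (- F)"
  proof -
    have "norm1 (aF - a) = infsum (\<lambda>t. norm ((aF - a) t)) (- F)"
      unfolding norm1_def by (rule infsum_cong_neutral) (auto simp: aF_def)
    also have "\<dots> = infsum (\<lambda>t. norm (a t)) (- F)"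
      by (rule infsum_cong) (auto simp: aF_def)
    finally show ?thesis .
  qed
  have "qnorm (aF - a) < d" using qnorm_le[of "aF - a"] aF a n1 F(2) by simp
  then have op: "opnorm p (\<lambda>x. \<Theta> (qmap aF) x - \<Theta> (qmap a) x) < e" using d aF by blast
  have "opnorm p (\<lambda>x. \<Theta> (qmap aF) x - \<Theta> (qmap a) x) = opnorm p (\<Theta> (qmap (aF - a)))"
    by (rule opnorm_cong) (use Th_diff aF a in auto)
  then have op2: "opnorm p (\<Theta> (qmap (aF - a))) < e" using op by simp
  have "norm (\<Theta> (qmap (aF - a)) (ee n) m) \<le> lpnorm p (\<Theta> (qmap (aF - a)) (ee n))"
    by (rule coord_le_lpnorm[OF pp Th_lp]) (use aF a ee_lp pp in auto)
  also have "\<dots> \<le> opnorm p (\<Theta> (qmap (aF - a)))"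
    by (rule opnorm_upper[OF pp Th_bop]) (use aF a ee_lp[OF pp] ee_norm[OF pp] in auto)
  finally have A: "norm (\<Theta> (qmap aF) (ee n) m - \<Theta> (qmap a) (ee n) m) < e"
    using op2 Th_diff[OF aF a ee_lp[OF pp]] by simp
  have B: "norm (LL (chi n m) aF - LL (chi n m) a) < e"
    using LL_bound[of "aF - a" "chi n m"] LL_diff[OF aF a, of "chi n m"] chi_bound aF a n1 F(2) by simp
  have C: "\<Theta> (qmap aF) (ee n) m = LL (chi n m) aF"
    unfolding aF_def using Th_entry_fin[OF F(1)] LL_fin[OF F(1), of "\<lambda>s. if s \<in> F then a s else 0"] by simp
  show "norm (\<Theta> (qmap a) (ee n) m - LL (chi n m) a) < 2 * e"
    using A B C norm_triangle_lt[of "\<Theta> (qmap a) (ee n) m - \<Theta> (qmap aF) (ee n) m" "LL (chi n m) aF - LL (chi n m) a" "2*e"]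
    by (simp add: norm_minus_commute)
qed

end




lemma summable_finsum:
  fixes f :: "'s \<Rightarrow> 'a \<Rightarrow> real"
  shows "finite S \<Longrightarrow> (\<And>s. s \<in> S \<Longrightarrow> f s summable_on A) \<Longrightarrow> (\<lambda>t. \<Sum>s\<in>S. f s t) summable_on A"
proof (induction S rule: finite_induct)
  case empty then show ?case by simp
next
  case (insert x F)
  then show ?case using summable_on_add[of "f x" A "\<lambda>t. \<Sum>s\<in>F. f s t"] by simp
qed

lemma infsum_finsum:
  fixes f :: "'s \<Rightarrow> 'a \<Rightarrow> real"
  shows "finite S \<Longrightarrow> (\<And>s. s \<in> S \<Longrightarrow> f s summable_on A) \<Longrightarrow> infsum (\<lambda>t. \<Sum>s\<in>S. f s t) A = (\<Sum>s\<in>S. infsum (f s) A)"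
proof (induction S rule: finite_induct)
  case empty then show ?case by simp
next
  case (insert x F)
  have "infsum (\<lambda>t. f x t + (\<Sum>s\<in>F. f s t)) A = infsum (f x) A + infsum (\<lambda>t. \<Sum>s\<in>F. f s t) A"
    by (rule infsum_add) (use insert summable_finsum[of F f A] in auto)
  then show ?case using insert by simp
qed

lemma idx_append: "idx (a @ b) k = idx a (idx b k)"
  by (induction a) auto

lemma idx_prefix:
  "length u \<le> length x \<Longrightarrow> idx u k = idx x j \<Longrightarrow> \<exists>w. x = u @ w \<and> k = idx w j"
proof (induction u arbitrary: x)
  case Nil then show ?case by (simp add: idx_append[symmetric])
next
  case (Cons g u)
  then obtain g' x' where x: "x = g' # x'" by (cases x) auto
  have "step g (idx u k) = step g' (idx x' j)" using Cons.prems x by simp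
  then have g: "g = g'" using step_disj by blast
  then have "idx u k = idx x' j" using step_inj \<open>step g (idx u k) = step g' (idx x' j)\<close> by blast
  then show ?case using Cons.IH[of x'] Cons.prems x g by auto
qed

lemma idx_ge1: "idx w 1 \<ge> 1"
  by (induction w) (auto simp: step_def split: gen.splits)

lemma idx_eq0: "idx w k = 0 \<Longrightarrow> k = 0"
  by (induction w) (auto simp: step_def split: gen.splits)

lemma idx_eq1: "w \<noteq> [] \<Longrightarrow> idx w k = 1 \<Longrightarrow> k = 0"
proof -
  assume "w \<noteq> []" "idx w k = 1"
  then obtain g w' where w: "w = g # w'" "step g (idx w' k) = 1" by (cases w) auto
  then have "idx w' k = 0" by (auto simp: step_def split: gen.splits)
  then show "k = 0" by (rule idx_eq0)
qed

lemma idx_one_inj: "idx w 1 = idx w' 1 \<Longrightarrow> w = w'"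
proof -
  have main: "length w \<le> length w' \<Longrightarrow> idx w 1 = idx w' 1 \<Longrightarrow> w = w'" for w w'
  proof -
    assume "length w \<le> length w'" "idx w 1 = idx w' 1"
    then obtain r where r: "w' = w @ r" "1 = idx r 1" using idx_prefix by blast
    have "r = []" using r(2) idx_eq1[of r 1] by auto
    then show ?thesis using r by simp
  qed
  assume "idx w 1 = idx w' 1"
  then show "w = w'" using main[of w w'] main[of w' w] by (cases "length w \<le> length w'") auto
qed

lemma core_comb:
  assumes "idx u k = idx x 1" "idx v k = idx y 1"
  shows "(\<exists>w. x = u @ w \<and> y = v @ w) \<or>
    (length x < length u \<and> length y < length v \<and> x = take (length x) u \<and> y = take (length y) v)"
proof (cases "length u \<le> length x")
  case ux: True
  then obtain w1 where w1: "x = u @ w1" "k = idx w1 1" using idx_prefix assms(1) by blast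
  show ?thesis
  proof (cases "length v \<le> length y")
    case True
    then obtain w2 where w2: "y = v @ w2" "k = idx w2 1" using idx_prefix assms(2) by blast
    then show ?thesis using w1 idx_one_inj by auto
  next
    case False
    then obtain w2 where w2: "v = y @ w2" "idx w2 k = 1" using idx_prefix[of y v 1 k] assms(2) by auto
    have "w2 \<noteq> []" using w2 False by auto
    then have "k = 0" using idx_eq1 w2 by blast
    then show ?thesis using w1 idx_ge1[of w1] by simp
  qed
next
  case ux: False
  then obtain w1 where w1: "u = x @ w1" "idx w1 k = 1" using idx_prefix[of x u 1 k] assms(1) by auto
  have "w1 \<noteq> []" using w1 ux by auto
  then have k0: "k = 0" using idx_eq1 w1 by blast
  show ?thesis
  proof (cases "length v \<le> length y")
    case True
    then obtain w2 where w2: "y = v @ w2" "k = idx w2 1" using idx_prefix assms(2) by blast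
    then show ?thesis using k0 idx_ge1[of w2] by simp
  next
    case False
    then obtain w2 where w2: "v = y @ w2" using idx_prefix[of y v 1 k] assms(2) by auto
    then show ?thesis using w1 ux False by auto
  qed
qed

definition mnl :: "cu \<Rightarrow> nat" where "mnl t = min (length (fst t)) (length (snd t))"
definition lagok :: "nat \<Rightarrow> cu \<Rightarrow> bool" where
  "lagok K t \<longleftrightarrow> length (fst t) \<le> length (snd t) + K \<and> length (snd t) \<le> length (fst t) + K"
definition FF :: "nat \<Rightarrow> nat \<Rightarrow> cu set" where "FF N K = {t. mnl t \<le> N \<and> lagok K t}"
definition SS :: "nat \<Rightarrow> nat \<Rightarrow> cu set" where "SS N K = {t. mnl t = N \<and> lagok K t}"
definition chs :: "cu \<Rightarrow> cu \<Rightarrow> complex" where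
  "chs s = chi (idx (snd s) 1) (idx (fst s) 1)"

lemma gen_UNIV: "(UNIV :: gen set) = {G1, G2}"
  using gen.exhaust by auto

lemma finite_gen: "finite (UNIV :: gen set)"
  by (simp add: gen_UNIV)

lemma finite_words: "finite {xs :: gen list. length xs \<le> n}"
  using finite_lists_length_le[OF finite_gen, of n] by simp

lemma FF_sub_words: "FF N K \<subseteq> {xs :: gen list. length xs \<le> N + K} \<times> {xs :: gen list. length xs \<le> N + K}"
proof
  fix t assume "t \<in> FF N K"
  then have a: "min (length (fst t)) (length (snd t)) \<le> N"
    "length (fst t) \<le> length (snd t) + K" "length (snd t) \<le> length (fst t) + K"
    by (auto simp: FF_def mnl_def lagok_def)
  then have "length (fst t) \<le> N + K" "length (snd t) \<le> N + K"
    by (simp_all add: min_def split: if_splits)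
  then show "t \<in> {xs :: gen list. length xs \<le> N + K} \<times> {xs :: gen list. length xs \<le> N + K}"
    by (simp add: mem_Times_iff)
qed

lemma FF_finite: "finite (FF N K)"
proof -
  have "finite ({xs :: gen list. length xs \<le> N + K} \<times> {xs :: gen list. length xs \<le> N + K})"
    by (intro finite_cartesian_product finite_words)
  then show ?thesis using FF_sub_words by (rule finite_subset[rotated])
qed
lemma SS_sub: "SS N K \<subseteq> FF N K"
  by (auto simp: SS_def FF_def)

lemma SS_finite: "finite (SS N K)"
  by (rule finite_subset[OF SS_sub FF_finite])

lemma chs_in_FF:
  assumes t: "t \<in> FF N K" and s: "s \<in> SS N K"
  shows "chs s t = RR (N - mnl t) t s"
proof -
  obtain u v where tt: "t = (u, v)" by force
  obtain x y where ss: "s = (x, y)" by force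
  have "(\<exists>k. idx u k = idx x 1 \<and> idx v k = idx y 1) \<longleftrightarrow>
        (\<exists>w. length w = N - mnl t \<and> x = u @ w \<and> y = v @ w)"
  proof
    assume "\<exists>k. idx u k = idx x 1 \<and> idx v k = idx y 1"
    then obtain k where k: "idx u k = idx x 1" "idx v k = idx y 1" by blast
    from core_comb[OF k] show "\<exists>w. length w = N - mnl t \<and> x = u @ w \<and> y = v @ w"
    proof
      assume "\<exists>w. x = u @ w \<and> y = v @ w"
      then obtain w where w: "x = u @ w" "y = v @ w" by blast
      have "mnl s = mnl t + length w" using w tt ss by (simp add: mnl_def)
      then show ?thesis using w s by (auto simp: SS_def)
    next
      assume "length x < length u \<and> length y < length v \<and> x = take (length x) u \<and> y = take (length y) v"
      then have "mnl t > mnl s" using tt ss by (auto simp: mnl_def)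
      then show ?thesis using t s by (auto simp: SS_def FF_def)
    qed
  next
    assume "\<exists>w. length w = N - mnl t \<and> x = u @ w \<and> y = v @ w"
    then obtain w where "x = u @ w" "y = v @ w" by blast
    then show "\<exists>k. idx u k = idx x 1 \<and> idx v k = idx y 1"
      by (intro exI[of _ "idx w 1"]) (simp add: idx_append)
  qed
  then show ?thesis by (simp add: chs_def chi_def RR_val tt ss)
qed

lemma chs_out_FF:
  assumes t: "t \<notin> FF N K" and s: "s \<in> SS N K" and c: "chs s t \<noteq> 0"
  shows "N < mnl t \<and> fst s = take (length (fst s)) (fst t) \<and> snd s = take (length (snd s)) (snd t)"
proof -
  obtain u v where tt: "t = (u, v)" by force
  obtain x y where ss: "s = (x, y)" by force
  obtain k where k: "idx u k = idx x 1" "idx v k = idx y 1"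
    using c by (auto simp: chs_def chi_def tt ss split: if_splits)
  from core_comb[OF k] show ?thesis
  proof
    assume "\<exists>w. x = u @ w \<and> y = v @ w"
    then obtain w where w: "x = u @ w" "y = v @ w" by blast
    then have "t \<in> FF N K" using s tt ss by (auto simp: SS_def FF_def mnl_def lagok_def)
    then show ?thesis using t by simp
  next
    assume "length x < length u \<and> length y < length v \<and> x = take (length x) u \<and> y = take (length y) v"
    then show ?thesis using s tt ss by (auto simp: SS_def mnl_def)
  qed
qed

lemma chs_count:
  assumes t: "t \<notin> FF N K"
  shows "(\<Sum>s\<in>SS N K. norm (chs s t)) \<le> (if N < mnl t then 2 * real K + 2 else 0)"
proof -
  define LS where "LS = ({N} \<times> {N..N+K}) \<union> ({N..N+K} \<times> {N})"
  have cardLS: "card LS \<le> 2 * K + 2"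
  proof -
    have "card LS \<le> card ({N} \<times> {N..N+K}) + card ({N..N+K} \<times> {N})"
      unfolding LS_def by (rule card_Un_le)
    also have "\<dots> = 2 * K + 2" by (simp add: card_cartesian_product)
    finally show ?thesis .
  qed
  have fLS: "finite LS" by (simp add: LS_def)
  define Z where "Z = {s \<in> SS N K. chs s t \<noteq> 0}"
  have sumZ: "(\<Sum>s\<in>SS N K. norm (chs s t)) = (\<Sum>s\<in>Z. norm (chs s t))"
    by (rule sum.mono_neutral_right) (auto simp: Z_def SS_finite)
  also have "\<dots> \<le> (\<Sum>s\<in>Z. 1)"
    by (rule sum_mono) (simp add: chs_def chi_bound)
  also have "\<dots> = card Z" by simp
  finally have le: "(\<Sum>s\<in>SS N K. norm (chs s t)) \<le> card Z" .
  show ?thesis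
  proof (cases "N < mnl t")
    case True
    have Zs: "Z \<subseteq> (\<lambda>(i, j). (take i (fst t), take j (snd t))) ` LS"
    proof
      fix s assume "s \<in> Z"
      then have s: "s \<in> SS N K" "chs s t \<noteq> 0" by (auto simp: Z_def)
      from chs_out_FF[OF t s] have e: "fst s = take (length (fst s)) (fst t)" "snd s = take (length (snd s)) (snd t)"
        by auto
      have "(length (fst s), length (snd s)) \<in> LS"
        using s(1) by (auto simp: LS_def SS_def mnl_def lagok_def min_def split: if_splits)
      then show "s \<in> (\<lambda>(i, j). (take i (fst t), take j (snd t))) ` LS"
        using e by (auto intro!: image_eqI[of _ _ "(length (fst s), length (snd s))"] prod_eqI)
    qed
    have "card Z \<le> card ((\<lambda>(i, j). (take i (fst t), take j (snd t))) ` LS)"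
      by (rule card_mono[OF finite_imageI[OF fLS] Zs])
    also have "\<dots> \<le> card LS" by (rule card_image_le[OF fLS])
    finally have "card Z \<le> card LS" .
    then show ?thesis using le cardLS True by simp
  next
    case False
    then have "Z = {}" using chs_out_FF[OF t] by (auto simp: Z_def)
    then show ?thesis using le False by simp
  qed
qed




lemma chs_bound: "norm (chs s t) \<le> 1"
  by (simp add: chs_def chi_bound)

lemma sum_len_bound: "finite F \<Longrightarrow> t \<in> F \<Longrightarrow> length (fst t) + length (snd t) \<le> (\<Sum>t\<in>F. length (fst t) + length (snd t))"
  by (rule member_le_sum) auto

lemma M_supp:
  assumes "s \<notin> SS N K" "t \<in> FF N K"
  shows "RR (N - mnl t) t s = 0"
proof -
  obtain u v where tt: "t = (u, v)" by force
  obtain x y where ss: "s = (x, y)" by force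
  have "\<not> (\<exists>w. length w = N - mnl t \<and> x = u @ w \<and> y = v @ w)"
  proof
    assume "\<exists>w. length w = N - mnl t \<and> x = u @ w \<and> y = v @ w"
    then obtain w where w: "length w = N - mnl t" "x = u @ w" "y = v @ w" by blast
    have "mnl s = mnl t + length w" using w(2,3) tt ss by (simp add: mnl_def)
    then have "s \<in> SS N K" using w assms(2) tt ss by (auto simp: SS_def FF_def lagok_def)
    then show False using assms(1) by simp
  qed
  then show ?thesis by (simp add: RR_val tt ss)
qed

lemma ker_J:
  assumes a: "a \<in> l1" and h: "\<And>n m. LL (chi n m) a = 0"
  shows "a \<in> J"
proof (rule J_closed[OF a])
  fix e :: real assume e: "e > 0"
  have na: "\<And>A. (\<lambda>t. norm (a t)) summable_on A" using l1_abs_summable_on[OF a] .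
  obtain F1 where F1: "finite F1" "infsum (\<lambda>t. norm (a t)) (- F1) < e / 4"
    using tail_small[OF a, of "e/4"] e by auto
  define K where "K = (\<Sum>t\<in>F1. length (fst t) + length (snd t))"
  define c where "c = 2 * real K + 2"
  have c0: "c > 0" by (simp add: c_def)
  obtain F2 where F2: "finite F2" "infsum (\<lambda>t. norm (a t)) (- F2) < e / (4 * c)"
    using tail_small[OF a, of "e/(4*c)"] e c0 by auto
  define N where "N = (\<Sum>t\<in>F1 \<union> F2. length (fst t) + length (snd t))"
  have F1FF: "F1 \<subseteq> FF N K"
  proof
    fix t assume t: "t \<in> F1"
    have "length (fst t) + length (snd t) \<le> K" unfolding K_def using sum_len_bound[OF F1(1) t] .
    moreover have "length (fst t) + length (snd t) \<le> N" unfolding N_def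
      using sum_len_bound[of "F1 \<union> F2" t] F1(1) F2(1) t by auto
    ultimately show "t \<in> FF N K" by (auto simp: FF_def mnl_def lagok_def)
  qed
  have F2N: "\<And>t. t \<in> F2 \<Longrightarrow> mnl t \<le> N"
  proof -
    fix t assume t: "t \<in> F2"
    have "length (fst t) + length (snd t) \<le> N" unfolding N_def
      using sum_len_bound[of "F1 \<union> F2" t] F1(1) F2(1) t by auto
    then show "mnl t \<le> N" by (auto simp: mnl_def)
  qed
  define FS where "FS = FF N K"
  define SN where "SN = SS N K"
  have fFS: "finite FS" by (simp add: FS_def FF_finite)
  have fSN: "finite SN" by (simp add: SN_def SS_finite)
  define aF where "aF = (\<lambda>s. if s \<in> FS then a s else 0)"
  define M where "M = (\<lambda>s. \<Sum>t\<in>FS. a t * RR (N - mnl t) t s)"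
  define g where "g = (\<Sum>t\<in>FS. (\<lambda>s. a t * (delta t - RR (N - mnl t) t) s))"
  have gJ: "g \<in> J" unfolding g_def
    by (rule J_sum[OF fFS]) (intro J_scal RR_J)
  have aF_l1: "aF \<in> l1" unfolding aF_def
    by (rule l1_fin_supp) (rule finite_subset[OF _ fFS], auto)
  have M_zero: "\<And>s. s \<notin> SN \<Longrightarrow> M s = 0"
    unfolding M_def SN_def FS_def using M_supp by simp
  have M_l1: "M \<in> l1"
    by (rule l1_fin_supp) (rule finite_subset[OF _ fSN], use M_zero in auto)
  have ag: "a - g = (a - aF) + M"
  proof
    fix s
    have "g s = (\<Sum>t\<in>FS. a t * delta t s) - M s"
      unfolding g_def M_def by (simp add: sum_fun_apply right_diff_distrib sum_subtractf)
    moreover have "(\<Sum>t\<in>FS. a t * delta t s) = aF s"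
      unfolding aF_def delta_def using fFS by (simp add: mult_ind sum.delta')
    ultimately show "(a - g) s = ((a - aF) + M) s" by simp
  qed
  have n1: "norm1 (a - aF) < e / 4"
  proof -
    have "norm1 (a - aF) = infsum (\<lambda>t. norm ((a - aF) t)) (- FS)"
      unfolding norm1_def by (rule infsum_cong_neutral) (auto simp: aF_def)
    also have "\<dots> = infsum (\<lambda>t. norm (a t)) (- FS)"
      by (rule infsum_cong) (auto simp: aF_def)
    also have "\<dots> \<le> infsum (\<lambda>t. norm (a t)) (- F1)"
      by (rule tail_mono[OF a]) (use F1FF in \<open>auto simp: FS_def\<close>)
    finally show ?thesis using F1(2) by simp
  qed
  have Ms: "\<And>s. s \<in> SN \<Longrightarrow> norm (M s) \<le> infsum (\<lambda>t. norm (a t) * norm (chs s t)) (- FS)"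
  proof -
    fix s assume s: "s \<in> SN"
    have M1: "M s = (\<Sum>t\<in>FS. a t * chs s t)"
      unfolding M_def using chs_in_FF s by (simp add: FS_def SN_def)
    have sm: "\<And>A. (\<lambda>t. a t * chs s t) summable_on A"
      by (rule bounded_prod_summable[OF a chs_bound])
    have "LL (chs s) a = 0" using h by (simp add: chs_def)
    moreover have "LL (chs s) a = infsum (\<lambda>t. a t * chs s t) FS + infsum (\<lambda>t. a t * chs s t) (- FS)"
      unfolding LL_def using infsum_Un_disjoint[OF sm sm, of FS "- FS"] by (simp add: Compl_partition)
    ultimately have "M s = - infsum (\<lambda>t. a t * chs s t) (- FS)"
      using M1 fFS by (simp add: eq_neg_iff_add_eq_0)
    then have "norm (M s) = norm (infsum (\<lambda>t. a t * chs s t) (- FS))" by simp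
    also have "\<dots> \<le> infsum (\<lambda>t. norm (a t * chs s t)) (- FS)"
      by (rule norm_infsum_bound) (rule bounded_prod_abs_summable[OF a chs_bound])
    finally show "norm (M s) \<le> infsum (\<lambda>t. norm (a t) * norm (chs s t)) (- FS)"
      by (simp add: norm_mult)
  qed
  have smS: "\<And>s. (\<lambda>t. norm (a t) * norm (chs s t)) summable_on A" for A
    using bounded_prod_abs_summable[OF a chs_bound] by (simp add: norm_mult)
  have nM: "norm1 M \<le> e / 4"
  proof -
    have "norm1 M = (\<Sum>s\<in>SN. norm (M s))" by (rule norm1_fin[OF fSN M_zero])
    also have "\<dots> \<le> (\<Sum>s\<in>SN. infsum (\<lambda>t. norm (a t) * norm (chs s t)) (- FS))"
      by (rule sum_mono) (rule Ms)
    also have "\<dots> = infsum (\<lambda>t. \<Sum>s\<in>SN. norm (a t) * norm (chs s t)) (- FS)"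
      by (rule infsum_finsum[symmetric, OF fSN]) (rule smS)
    also have "\<dots> \<le> infsum (\<lambda>t. c * norm (a t)) (- F2)"
    proof (rule infsum_mono_neutral)
      show "(\<lambda>t. \<Sum>s\<in>SN. norm (a t) * norm (chs s t)) summable_on - FS"
        by (rule summable_finsum[OF fSN]) (rule smS)
      show "(\<lambda>t. c * norm (a t)) summable_on - F2"
        by (rule summable_on_cmult_right) (rule na)
      fix t
      have cnt: "t \<in> - FS \<Longrightarrow> (\<Sum>s\<in>SN. norm (a t) * norm (chs s t)) \<le> norm (a t) * (if N < mnl t then c else 0)"
      proof -
        assume "t \<in> - FS"
        then have "(\<Sum>s\<in>SN. norm (chs s t)) \<le> (if N < mnl t then c else 0)"
          using chs_count[of t N K] by (cases "N < mnl t") (simp_all add: FS_def SN_def c_def)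
        then have "norm (a t) * (\<Sum>s\<in>SN. norm (chs s t)) \<le> norm (a t) * (if N < mnl t then c else 0)"
          by (rule mult_left_mono) simp
        then show ?thesis by (simp add: sum_distrib_left)
      qed
      { assume t: "t \<in> - FS \<inter> - F2"
        then show "(\<Sum>s\<in>SN. norm (a t) * norm (chs s t)) \<le> c * norm (a t)"
        proof -
          have "0 \<le> c * norm (a t)" using c0 by simp
          moreover have "(\<Sum>s\<in>SN. norm (a t) * norm (chs s t)) \<le> norm (a t) * (if N < mnl t then c else 0)"
            using cnt t by auto
          ultimately show ?thesis
          proof (cases "N < mnl t")
            case True
            then show ?thesis using \<open>(\<Sum>s\<in>SN. norm (a t) * norm (chs s t)) \<le> norm (a t) * (if N < mnl t then c else 0)\<close>
              by (simp add: mult.commute)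
          next
            case False
            then have "(\<Sum>s\<in>SN. norm (a t) * norm (chs s t)) \<le> 0"
              using \<open>(\<Sum>s\<in>SN. norm (a t) * norm (chs s t)) \<le> norm (a t) * (if N < mnl t then c else 0)\<close> by simp
            then show ?thesis using \<open>0 \<le> c * norm (a t)\<close> by linarith
          qed
        qed }
      { assume t: "t \<in> - FS - - F2"
        then have "mnl t \<le> N" using F2N by auto
        then show "(\<Sum>s\<in>SN. norm (a t) * norm (chs s t)) \<le> 0"
          using cnt t by simp }
      { assume "t \<in> - F2 - - FS"
        then show "0 \<le> c * norm (a t)" using c0 by simp }
    qed
    also have "\<dots> = c * infsum (\<lambda>t. norm (a t)) (- F2)"
      by (rule infsum_cmult_right) (rule na)
    also have "\<dots> \<le> c * (e / (4 * c))"
      using F2(2) c0 by (intro mult_left_mono) auto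
    also have "\<dots> = e / 4" using c0 by simp
    finally show ?thesis .
  qed
  have "norm1 (a - g) \<le> norm1 (a - aF) + norm1 M"
    unfolding ag by (rule norm1_triangle) (use a aF_l1 M_l1 in auto)
  then have "norm1 (a - g) < e" using n1 nM e by simp
  then show "\<exists>g\<in>J. norm1 (a - g) < e" using gJ by blast
qed




definition mulp :: "(cu \<Rightarrow> complex) \<Rightarrow> cu \<Rightarrow> cu \<Rightarrow> complex" where
  "mulp \<psi> s t = (case cu_mult s t of None \<Rightarrow> 0 | Some x \<Rightarrow> \<psi> x)"

lemma mulp_bound: "(\<And>x. norm (\<psi> x) \<le> 1) \<Longrightarrow> norm (mulp \<psi> s t) \<le> 1"
  by (auto simp: mulp_def split: option.splits)

lemma prod_norm_summable:
  assumes a: "a \<in> l1" and b: "b \<in> l1"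
  shows "(\<lambda>st. norm (a (fst st) * b (snd st))) summable_on A"
proof -
  have "(\<lambda>st. norm (a (fst st) * b (snd st))) summable_on Sigma UNIV (\<lambda>_. UNIV)"
  proof -
    have "(\<lambda>z. norm ((\<lambda>(s, t). a s * b t) z)) summable_on Sigma UNIV (\<lambda>_. UNIV)"
    proof (rule Infinite_Sum.abs_summable_on_Sigma_iff[where f="\<lambda>(s, t). a s * b t", THEN iffD2], intro conjI ballI)
      fix s :: cu
      show "(\<lambda>t. norm ((\<lambda>(s, t). a s * b t) (s, t))) summable_on UNIV"
        using l1_abs_summable_on[OF b] by (simp add: norm_mult summable_on_cmult_right)
    next
      have "\<And>s. infsum (\<lambda>t. norm ((\<lambda>(s, t). a s * b t) (s, t))) UNIV = norm (a s) * norm1 b"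
        by (simp add: norm_mult norm1_def infsum_cmult_right')
      moreover have "(\<lambda>s. norm (norm (a s) * norm1 b)) summable_on UNIV"
        using l1_abs_summable_on[OF a] norm1_nonneg[of b]
        by (simp add: abs_mult summable_on_cmult_left)
      ultimately show "(\<lambda>s. norm (infsum (\<lambda>t. norm ((\<lambda>(s, t). a s * b t) (s, t))) UNIV)) summable_on UNIV"
        by simp
    qed
    then show ?thesis by (simp add: case_prod_beta)
  qed
  then show ?thesis using summable_on_subset_banach by fastforce
qed

lemma prod_summable:
  assumes a: "a \<in> l1" and b: "b \<in> l1" and c: "\<And>st. norm (c st) \<le> 1"
  shows "(\<lambda>st. a (fst st) * b (snd st) * c st) summable_on A"
proof -
  have "(\<lambda>st. norm (a (fst st) * b (snd st) * c st)) summable_on A"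
    by (rule summable_on_comparison_test[OF prod_norm_summable[OF a b]])
       (use c in \<open>auto simp: norm_mult intro: mult_left_le\<close>)
  then show ?thesis by (rule abs_summable_summable)
qed

definition fib :: "cu \<Rightarrow> (cu \<times> cu) set" where
  "fib x = {(s, t). cu_mult s t = Some x}"

definition DD :: "(cu \<times> cu) set" where
  "DD = {(s, t). cu_mult s t \<noteq> None}"

lemma bij_snd_fib: "bij_betw snd (Sigma UNIV fib) DD"
proof (rule bij_betw_imageI)
  show "inj_on snd (Sigma UNIV fib)" by (auto simp: inj_on_def fib_def)
  show "snd ` Sigma UNIV fib = DD"
  proof
    show "snd ` Sigma UNIV fib \<subseteq> DD" by (auto simp: fib_def DD_def)
    show "DD \<subseteq> snd ` Sigma UNIV fib"
    proof
      fix st assume "st \<in> DD"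
      then obtain x where "cu_mult (fst st) (snd st) = Some x" by (auto simp: DD_def)
      then show "st \<in> snd ` Sigma UNIV fib"
        by (intro image_eqI[of _ _ "(x, st)"]) (auto simp: fib_def)
    qed
  qed
qed

lemma conv_fib: "conv a b x = infsum (\<lambda>st. a (fst st) * b (snd st)) (fib x)"
  unfolding conv_def fib_def by (simp add: split_def)

lemma conv_l1_LL:
  assumes a: "a \<in> l1" and b: "b \<in> l1" and \<psi>: "\<And>x. norm (\<psi> x) \<le> 1"
  shows "conv a b \<in> l1"
    and "LL \<psi> (conv a b) = infsum (\<lambda>st. a (fst st) * b (snd st) * mulp \<psi> (fst st) (snd st)) UNIV"
proof -
  define h where "h = (\<lambda>st. a (fst st) * b (snd st))"
  have hn: "\<And>A. (\<lambda>st. norm (h st)) summable_on A" unfolding h_def by (rule prod_norm_summable[OF a b])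
  have S1: "(\<lambda>z. norm (h (snd z))) summable_on Sigma UNIV fib"
    using summable_on_reindex_bij_betw[OF bij_snd_fib, of "\<lambda>st. norm (h st)"] hn by simp
  have eqf: "(\<lambda>(x::cu, st). norm (h st)) = (\<lambda>z. norm (h (snd z)))" by (auto simp: fun_eq_iff)
  have S1': "(\<lambda>(x, st). norm (h st)) summable_on Sigma UNIV fib"
    using S1 by (simp only: eqf)
  have R1: "(\<lambda>x. infsum (\<lambda>st. norm (h st)) (fib x)) summable_on UNIV"
    using summable_on_Sigma_banach[OF S1'] .
  have cb: "\<And>x. norm (conv a b x) \<le> infsum (\<lambda>st. norm (h st)) (fib x)"
    unfolding conv_fib h_def[symmetric] by (rule norm_infsum_bound) (rule hn)
  show l1: "conv a b \<in> l1"
    unfolding l1_def mem_Collect_eq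
    by (rule summable_on_comparison_test[OF R1]) (use cb in auto)
  define G where "G = (\<lambda>(x, st). h st * \<psi> x)"
  have GS: "G summable_on Sigma UNIV fib"
  proof -
    have "(\<lambda>z. norm (G z)) summable_on Sigma UNIV fib"
      by (rule summable_on_comparison_test[OF S1]) (use \<psi> in \<open>auto simp: G_def norm_mult intro!: mult_left_le\<close>)
    then show ?thesis by (rule abs_summable_summable)
  qed
  have "LL \<psi> (conv a b) = infsum (\<lambda>x. infsum (\<lambda>st. h st * \<psi> x) (fib x)) UNIV"
    unfolding LL_def conv_fib h_def[symmetric] by (simp add: infsum_cmult_left')
  also have "\<dots> = infsum G (Sigma UNIV fib)"
    using infsum_Sigma'_banach[of "\<lambda>x st. h st * \<psi> x" UNIV fib] GS by (simp add: G_def case_prod_beta)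
  also have "\<dots> = infsum (\<lambda>z. h (snd z) * mulp \<psi> (fst (snd z)) (snd (snd z))) (Sigma UNIV fib)"
    by (rule infsum_cong) (auto simp: G_def fib_def mulp_def)
  also have "\<dots> = infsum (\<lambda>st. h st * mulp \<psi> (fst st) (snd st)) DD"
    by (rule infsum_reindex_bij_betw[OF bij_snd_fib])
  also have "\<dots> = infsum (\<lambda>st. h st * mulp \<psi> (fst st) (snd st)) UNIV"
    by (rule infsum_cong_neutral) (auto simp: DD_def mulp_def split: option.splits)
  finally show "LL \<psi> (conv a b) = infsum (\<lambda>st. a (fst st) * b (snd st) * mulp \<psi> (fst st) (snd st)) UNIV"
    by (simp add: h_def)
qed

lemma conv_LL_left:
  assumes a: "a \<in> l1" and b: "b \<in> l1" and \<psi>: "\<And>x. norm (\<psi> x) \<le> 1"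
  shows "LL \<psi> (conv a b) = infsum (\<lambda>s. a s * LL (mulp \<psi> s) b) UNIV"
proof -
  have mb: "\<And>st. norm (mulp \<psi> (fst st) (snd st)) \<le> 1" using mulp_bound \<psi> by blast
  have S: "(\<lambda>(s, t). a s * b t * mulp \<psi> s t) summable_on Sigma UNIV (\<lambda>_. UNIV)"
    using prod_summable[OF a b mb, where A=UNIV] by (simp add: split_def)
  have e: "LL \<psi> (conv a b) = infsum (\<lambda>st. a (fst st) * b (snd st) * mulp \<psi> (fst st) (snd st)) UNIV"
    by (rule conv_l1_LL(2)[OF a b]) (rule \<psi>)
  have "LL \<psi> (conv a b) = infsum (\<lambda>(s, t). a s * b t * mulp \<psi> s t) (Sigma UNIV (\<lambda>_. UNIV))"
    using e by (simp add: split_def)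
  also have "\<dots> = infsum (\<lambda>s. infsum (\<lambda>t. a s * b t * mulp \<psi> s t) UNIV) UNIV"
    using infsum_Sigma'_banach[OF S] by simp
  also have "\<dots> = infsum (\<lambda>s. a s * LL (mulp \<psi> s) b) UNIV"
    unfolding LL_def by (simp add: mult.assoc infsum_cmult_right')
  finally show ?thesis .
qed

lemma conv_LL_right:
  assumes a: "a \<in> l1" and b: "b \<in> l1" and \<psi>: "\<And>x. norm (\<psi> x) \<le> 1"
  shows "LL \<psi> (conv a b) = infsum (\<lambda>t. b t * LL (\<lambda>s. mulp \<psi> s t) a) UNIV"
proof -
  have mb: "\<And>st. norm (mulp \<psi> (fst st) (snd st)) \<le> 1" using mulp_bound \<psi> by blast
  have S: "(\<lambda>(s, t). a s * b t * mulp \<psi> s t) summable_on UNIV \<times> UNIV"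
    using prod_summable[OF a b mb, where A=UNIV] by (simp add: split_def)
  have e: "LL \<psi> (conv a b) = infsum (\<lambda>st. a (fst st) * b (snd st) * mulp \<psi> (fst st) (snd st)) UNIV"
    by (rule conv_l1_LL(2)[OF a b]) (rule \<psi>)
  have "LL \<psi> (conv a b) = infsum (\<lambda>(s, t). a s * b t * mulp \<psi> s t) (Sigma UNIV (\<lambda>_. UNIV))"
    using e by (simp add: split_def)
  also have "\<dots> = infsum (\<lambda>s. infsum (\<lambda>t. a s * b t * mulp \<psi> s t) UNIV) UNIV"
    using infsum_Sigma'_banach[of "\<lambda>s t. a s * b t * mulp \<psi> s t" UNIV "\<lambda>_. UNIV"] S by simp
  also have "\<dots> = infsum (\<lambda>t. infsum (\<lambda>s. a s * b t * mulp \<psi> s t) UNIV) UNIV"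
    by (rule infsum_swap_banach) (use S in simp)
  also have "\<dots> = infsum (\<lambda>t. infsum (\<lambda>s. b t * (a s * mulp \<psi> s t)) UNIV) UNIV"
    by (simp add: mult.commute mult.left_commute)
  also have "\<dots> = infsum (\<lambda>t. b t * LL (\<lambda>s. mulp \<psi> s t) a) UNIV"
    unfolding LL_def by (simp only: infsum_cmult_right')
  finally show ?thesis .
qed




definition pref :: "gen list \<Rightarrow> gen list \<Rightarrow> bool" where
  "pref b u \<longleftrightarrow> (\<exists>r. u = b @ r)"

lemma pref_snoc: "pref b (u @ [g]) \<longleftrightarrow> pref b u \<or> b = u @ [g]"
proof
  assume "pref b (u @ [g])"
  then obtain r where r: "u @ [g] = b @ r" by (auto simp: pref_def)
  show "pref b u \<or> b = u @ [g]"
  proof (cases r rule: rev_cases)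
    case Nil then show ?thesis using r by simp
  next
    case (snoc r' x) then show ?thesis using r by (auto simp: pref_def)
  qed
next
  assume "pref b u \<or> b = u @ [g]"
  then show "pref b (u @ [g])" by (auto simp: pref_def)
qed

lemma pref_app[simp]: "pref b (b @ r)"
  by (auto simp: pref_def)

lemma pref_appD: "pref (u @ w) b \<Longrightarrow> pref u b"
  by (auto simp: pref_def)

lemma pref_snoc2: "pref (b @ [g]) u \<longleftrightarrow> (\<exists>r. u = b @ g # r)"
  by (simp add: pref_def)

lemma mulp_formula:
  "mulp \<psi> (a, b) (u, v) = (if pref b u then \<psi> (a @ drop (length b) u, v)
     else if pref u b then \<psi> (a, v @ drop (length u) b) else 0)"
  by (auto simp: mulp_def cu_mult_def pref_def)

definition harm :: "(cu \<Rightarrow> complex) \<Rightarrow> bool" where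
  "harm \<psi> \<longleftrightarrow> (\<forall>t. norm (\<psi> t) \<le> 1) \<and>
     (\<forall>u v. \<psi> (u, v) = \<psi> (u @ [G1], v @ [G1]) + \<psi> (u @ [G2], v @ [G2]))"

lemma harmD: "harm \<psi> \<Longrightarrow> \<psi> (u, v) = \<psi> (u @ [G1], v @ [G1]) + \<psi> (u @ [G2], v @ [G2])"
  unfolding harm_def by blast

lemma harm_bound: "harm \<psi> \<Longrightarrow> norm (\<psi> t) \<le> 1"
  unfolding harm_def by blast

lemma harm_right:
  assumes h: "harm \<psi>"
  shows "harm (mulp \<psi> s)"
  unfolding harm_def
proof (intro conjI allI)
  fix t show "norm (mulp \<psi> s t) \<le> 1" using mulp_bound harm_bound[OF h] by blast
next
  fix u v
  obtain a b where s: "s = (a, b)" by force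
  show "mulp \<psi> s (u, v) = mulp \<psi> s (u @ [G1], v @ [G1]) + mulp \<psi> s (u @ [G2], v @ [G2])"
  proof (cases "pref b u")
    case True
    then obtain r where r: "u = b @ r" by (auto simp: pref_def)
    have "\<And>g. pref b (u @ [g])" using True pref_snoc by blast
    then show ?thesis using harmD[OF h, of "a @ r" v] by (simp add: s mulp_formula r)
  next
    case False
    note nb = False
    show ?thesis
    proof (cases "pref u b")
      case True
      then obtain r where r: "b = u @ r" by (auto simp: pref_def)
      have "r \<noteq> []" using nb r by (auto simp: pref_def)
      then obtain g0 r' where r': "r = g0 # r'" by (cases r) auto
      have eq0: "mulp \<psi> s (u @ [g0], v @ [g0]) = \<psi> (a, v @ r)"
        using r r' by (auto simp: s mulp_formula pref_def)
      have ne: "g \<noteq> g0 \<Longrightarrow> mulp \<psi> s (u @ [g], v @ [g]) = 0" for g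
        using r r' nb by (auto simp: s mulp_formula pref_snoc pref_def)
      have lhs: "mulp \<psi> s (u, v) = \<psi> (a, v @ r)"
        using nb True r by (simp add: s mulp_formula)
      show ?thesis
        by (cases g0) (use eq0 ne lhs in auto)
    next
      case False
      have "\<And>g. mulp \<psi> s (u @ [g], v @ [g]) = 0"
        using nb False by (auto simp: s mulp_formula pref_snoc dest: pref_appD)
      moreover have "mulp \<psi> s (u, v) = 0" using nb False by (simp add: s mulp_formula)
      ultimately show ?thesis by simp
    qed
  qed
qed

lemma harm_left:
  assumes h: "harm \<psi>"
  shows "harm (\<lambda>s. mulp \<psi> s t)"
  unfolding harm_def
proof (intro conjI allI)
  fix s show "norm (mulp \<psi> s t) \<le> 1" using mulp_bound harm_bound[OF h] by blast
next
  fix a b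
  obtain u v where t: "t = (u, v)" by force
  show "mulp \<psi> (a, b) t = mulp \<psi> (a @ [G1], b @ [G1]) t + mulp \<psi> (a @ [G2], b @ [G2]) t"
  proof (cases "pref b u")
    case True
    then obtain r where r: "u = b @ r" by (auto simp: pref_def)
    show ?thesis
    proof (cases r)
      case Nil
      have "\<And>g. mulp \<psi> (a @ [g], b @ [g]) t = \<psi> (a @ [g], v @ [g])"
        using r Nil by (auto simp: t mulp_formula pref_def)
      moreover have "mulp \<psi> (a, b) t = \<psi> (a, v)" using r Nil by (simp add: t mulp_formula pref_def)
      ultimately show ?thesis using harmD[OF h, of a v] by simp
    next
      case (Cons g0 r')
      have eq0: "mulp \<psi> (a @ [g0], b @ [g0]) t = \<psi> (a @ r, v)"
        using r Cons by (auto simp: t mulp_formula pref_def)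
      have ne: "g \<noteq> g0 \<Longrightarrow> mulp \<psi> (a @ [g], b @ [g]) t = 0" for g
        using r Cons by (auto simp: t mulp_formula pref_def append_eq_append_conv2 Cons_eq_append_conv)
      have lhs: "mulp \<psi> (a, b) t = \<psi> (a @ r, v)" using r by (simp add: t mulp_formula pref_def)
      show ?thesis by (cases g0) (use eq0 ne lhs in auto)
    qed
  next
    case False
    note nb = False
    show ?thesis
    proof (cases "pref u b")
      case True
      then obtain r where r: "b = u @ r" by (auto simp: pref_def)
      have "\<And>g. mulp \<psi> (a @ [g], b @ [g]) t = \<psi> (a @ [g], v @ r @ [g])"
        using r nb by (auto simp: t mulp_formula pref_def)
      moreover have "mulp \<psi> (a, b) t = \<psi> (a, v @ r)" using r nb by (simp add: t mulp_formula pref_def)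
      ultimately show ?thesis using harmD[OF h, of a "v @ r"] by simp
    next
      case False
      have "\<And>g. mulp \<psi> (a @ [g], b @ [g]) t = 0"
        using nb False by (auto simp: t mulp_formula pref_snoc dest: pref_appD)
      moreover have "mulp \<psi> (a, b) t = 0" using nb False by (simp add: t mulp_formula)
      ultimately show ?thesis by simp
    qed
  qed
qed




definition I0 :: "(cu \<Rightarrow> complex) set" where
  "I0 = {f \<in> l1. \<forall>\<psi>. harm \<psi> \<longrightarrow> LL \<psi> f = 0}"

lemma LL_delta: "LL \<psi> (delta s) = \<psi> s"
  using LL_fin[of "{s}" "delta s" \<psi>] by (simp add: delta_def)

lemma f0_I0: "f0 \<in> I0"
proof -
  have "f0 \<in> l1" by (simp add: f0_def)
  moreover have "LL \<psi> f0 = 0" if h: "harm \<psi>" for \<psi>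
  proof -
    have b: "\<And>t. norm (\<psi> t) \<le> 1" using harm_bound[OF h] .
    have "LL \<psi> f0 = \<psi> ([], []) - \<psi> ([G1], [G1]) - \<psi> ([G2], [G2])"
      unfolding f0_def cu_e_def
      by (simp add: LL_diff[OF _ _ b] LL_delta)
    also have "\<dots> = 0" using harmD[OF h, of "[]" "[]"] by simp
    finally show ?thesis .
  qed
  ultimately show ?thesis by (simp add: I0_def)
qed

lemma conv_l1: "a \<in> l1 \<Longrightarrow> b \<in> l1 \<Longrightarrow> conv a b \<in> l1"
  using conv_l1_LL(1)[of a b "\<lambda>_. 0"] by simp

lemma I0_closed_ideal: "is_closed_ideal I0"
  unfolding is_closed_ideal_def
proof (intro conjI ballI allI impI)
  show "I0 \<subseteq> l1" by (auto simp: I0_def)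
  show "0 \<in> I0" by (simp add: I0_def LL_def)
next
  fix a b assume a: "a \<in> I0" and b: "b \<in> I0"
  show "a + b \<in> I0" using a b by (auto simp: I0_def LL_add harm_bound)
next
  fix c :: complex and a assume a: "a \<in> I0"
  show "(\<lambda>x. c * a x) \<in> I0" using a by (auto simp: I0_def LL_scal)
next
  fix a b assume a: "a \<in> l1" and b: "b \<in> I0"
  have b1: "b \<in> l1" using b by (simp add: I0_def)
  show "conv a b \<in> I0"
  proof -
    have "LL \<psi> (conv a b) = 0" if h: "harm \<psi>" for \<psi>
    proof -
      have "LL \<psi> (conv a b) = infsum (\<lambda>s. a s * LL (mulp \<psi> s) b) UNIV"
        by (rule conv_LL_left[OF a b1]) (rule harm_bound[OF h])
      also have "\<dots> = 0" using b harm_right[OF h] by (simp add: I0_def)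
      finally show ?thesis .
    qed
    then show ?thesis using conv_l1[OF a b1] by (simp add: I0_def)
  qed
  show "conv b a \<in> I0"
  proof -
    have "LL \<psi> (conv b a) = 0" if h: "harm \<psi>" for \<psi>
    proof -
      have "LL \<psi> (conv b a) = infsum (\<lambda>t. a t * LL (\<lambda>s. mulp \<psi> s t) b) UNIV"
        by (rule conv_LL_right[OF b1 a]) (rule harm_bound[OF h])
      also have "\<dots> = 0" using b harm_left[OF h] by (simp add: I0_def)
      finally show ?thesis .
    qed
    then show ?thesis using conv_l1[OF b1 a] by (simp add: I0_def)
  qed
next
  fix f assume f: "f \<in> l1" and ap: "\<forall>e>0. \<exists>g\<in>I0. norm1 (f - g) < e"
  have "LL \<psi> f = 0" if h: "harm \<psi>" for \<psi>
  proof (rule ccontr)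
    assume ne: "LL \<psi> f \<noteq> 0"
    have "norm (LL \<psi> f) > 0" using ne by simp
    then obtain g where g: "g \<in> I0" "norm1 (f - g) < norm (LL \<psi> f)" using ap by blast
    have g1: "g \<in> l1" "LL \<psi> g = 0" using g(1) h by (auto simp: I0_def)
    have "norm (LL \<psi> f) = norm (LL \<psi> (f - g))"
      using LL_diff[OF f g1(1) harm_bound[OF h]] g1(2) by simp
    also have "\<dots> \<le> norm1 (f - g)" by (rule LL_bound) (use f g1 harm_bound[OF h] in auto)
    finally show False using g(2) by simp
  qed
  then show "f \<in> I0" using f by (simp add: I0_def)
qed

lemma J_I0: "j \<in> J \<Longrightarrow> j \<in> I0"
  using J_mem[OF _ I0_closed_ideal f0_I0] .

lemma qnorm_lower:
  assumes a: "a \<in> l1" and h: "harm \<psi>"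
  shows "norm (LL \<psi> a) \<le> qnorm a"
  unfolding qnorm_def
proof (rule cInf_greatest)
  show "{norm1 (a - j) |j. j \<in> J} \<noteq> {}" using zero_J by blast
next
  fix r assume "r \<in> {norm1 (a - j) |j. j \<in> J}"
  then obtain j where j: "j \<in> J" "r = norm1 (a - j)" by blast
  have j1: "j \<in> l1" "LL \<psi> j = 0" using J_I0[OF j(1)] h by (auto simp: I0_def)
  have "norm (LL \<psi> a) = norm (LL \<psi> (a - j))"
    using LL_diff[OF a j1(1) harm_bound[OF h]] j1(2) by simp
  also have "\<dots> \<le> norm1 (a - j)" by (rule LL_bound) (use a j1 harm_bound[OF h] in auto)
  finally show "norm (LL \<psi> a) \<le> r" using j by simp
qed




definition Bop :: "(nat \<Rightarrow> complex) \<Rightarrow> nat \<Rightarrow> complex" where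
  "Bop x = (\<lambda>m. (x (2 * m + 1) + x (2 * m)) / 2)"

lemma conv_half:
  fixes \<alpha> \<beta> p :: real
  assumes a: "\<alpha> \<ge> 0" and b: "\<beta> \<ge> 0" and p: "p \<ge> 1"
  shows "((\<alpha> + \<beta>) / 2) powr p \<le> (\<alpha> powr p + \<beta> powr p) / 2"
proof -
  have two: "(2::real) \<le> 2 powr p"
    using powr_mono[of 1 p 2] p by simp
  have one: "(\<gamma> / 2) powr p \<le> \<gamma> powr p / 2" if g: "\<gamma> \<ge> 0" for \<gamma> :: real
  proof -
    have "(\<gamma> / 2) powr p = \<gamma> powr p / 2 powr p" using g by (simp add: powr_divide)
    also have "\<dots> \<le> \<gamma> powr p / 2"
      by (rule divide_left_mono[OF two]) auto
    finally show ?thesis .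
  qed
  have z: "(0::real) powr p = 0" using p by simp
  show ?thesis
  proof (cases "\<alpha> = 0")
    case True
    then show ?thesis using one[OF b] z by simp
  next
    case an: False
    show ?thesis
    proof (cases "\<beta> = 0")
      case True
      then show ?thesis using one[OF a] z by simp
    next
      case False
      then have pos: "\<alpha> \<in> {0<..}" "\<beta> \<in> {0<..}" using a b an by auto
      have c: "((1 - 1/2) *\<^sub>R \<alpha> + (1/2) *\<^sub>R \<beta>) powr p \<le> (1 - 1/2) * \<alpha> powr p + (1/2) * \<beta> powr p"
        by (rule convex_onD[OF powr_convex[OF p]]) (use pos in auto)
      have eq: "(1 - 1/2) *\<^sub>R \<alpha> + (1/2) *\<^sub>R \<beta> = (\<alpha> + \<beta>) / 2" by simp
      have eq2: "(1 - 1/2) * \<alpha> powr p + (1/2) * \<beta> powr p = (\<alpha> powr p + \<beta> powr p) / 2" by simp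
      show ?thesis using c unfolding eq eq2 .
    qed
  qed
qed

lemma pair_sums:
  fixes h :: "nat \<Rightarrow> real"
  assumes "summable h"
  shows "(\<lambda>m. h (2 * m) + h (2 * m + 1)) sums suminf h"
proof -
  have ps: "(\<Sum>m<M. h (2 * m) + h (2 * m + 1)) = (\<Sum>i<2 * M. h i)" for M
    by (induction M) (simp_all add: algebra_simps)
  have "(\<lambda>n. \<Sum>i<n. h i) \<longlonglongrightarrow> suminf h" using assms summable_LIMSEQ by blast
  then have "((\<lambda>n. \<Sum>i<n. h i) \<circ> (\<lambda>M. 2 * M)) \<longlonglongrightarrow> suminf h"
    by (rule LIMSEQ_subseq_LIMSEQ) (auto simp: strict_mono_def)
  then show ?thesis unfolding sums_def ps by (simp add: o_def)
qed

lemma Bop_est: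
  assumes p: "p \<ge> 1" and x: "x \<in> lp p"
  shows "Bop x \<in> lp p" and "lpnorm p (Bop x) \<le> (1/2) powr (1/p) * lpnorm p x"
proof -
  define h where "h = (\<lambda>i. norm (x i) powr p)"
  have hs: "summable h" using x by (simp add: lp_def h_def)
  have h0: "\<And>i. h i \<ge> 0" by (simp add: h_def)
  define q where "q = (\<lambda>m. (h (2 * m) + h (2 * m + 1)) / 2)"
  have qs: "q sums (suminf h / 2)" unfolding q_def by (rule sums_divide[OF pair_sums[OF hs]])
  have pt: "norm (Bop x m) powr p \<le> q m" for m
  proof -
    have A: "norm (Bop x m) \<le> (norm (x (2 * m + 1)) + norm (x (2 * m))) / 2"
      unfolding Bop_def by (simp add: norm_divide norm_triangle_ineq divide_right_mono)
    have "norm (Bop x m) powr p \<le> ((norm (x (2 * m + 1)) + norm (x (2 * m))) / 2) powr p"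
      by (rule powr_mono2) (use p A in auto)
    also have "\<dots> \<le> (norm (x (2 * m + 1)) powr p + norm (x (2 * m)) powr p) / 2"
      by (rule conv_half) (use p in auto)
    finally show ?thesis by (simp add: q_def h_def add.commute)
  qed
  have bs: "summable (\<lambda>m. norm (Bop x m) powr p)"
    by (rule summable_comparison_test'[of q 0]) (use qs pt in \<open>auto simp: sums_iff\<close>)
  then show "Bop x \<in> lp p" by (simp add: lp_def)
  have le: "(\<Sum>m. norm (Bop x m) powr p) \<le> suminf h / 2"
    using suminf_le[OF pt bs] qs by (simp add: sums_iff)
  have nn: "0 \<le> (\<Sum>m. norm (Bop x m) powr p)" by (rule suminf_nonneg[OF bs]) simp
  have "lpnorm p (Bop x) \<le> (suminf h / 2) powr (1/p)"
    unfolding lpnorm_def by (rule powr_mono2) (use p nn le in auto)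
  also have "\<dots> = (1/2) powr (1/p) * (suminf h) powr (1/p)"
  proof -
    have "suminf h / 2 = (1/2) * suminf h" by simp
    moreover have "((1/2) * suminf h) powr (1/p) = (1/2) powr (1/p) * (suminf h) powr (1/p)"
      by (rule powr_mult)
    ultimately show ?thesis by simp
  qed
  also have "\<dots> = (1/2) powr (1/p) * lpnorm p x" by (simp add: lpnorm_def h_def)
  finally show "lpnorm p (Bop x) \<le> (1/2) powr (1/p) * lpnorm p x" .
qed

lemma Bop_pow_est:
  assumes p: "p \<ge> 1"
  shows "x \<in> lp p \<Longrightarrow> (Bop ^^ n) x \<in> lp p \<and> lpnorm p ((Bop ^^ n) x) \<le> ((1/2) powr (1/p)) ^ n * lpnorm p x"
proof (induction n arbitrary: x)
  case 0 then show ?case by simp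
next
  case (Suc n)
  have b: "Bop x \<in> lp p" "lpnorm p (Bop x) \<le> (1/2) powr (1/p) * lpnorm p x"
    using Bop_est[OF p Suc.prems] by auto
  have IH: "(Bop ^^ n) (Bop x) \<in> lp p" "lpnorm p ((Bop ^^ n) (Bop x)) \<le> ((1/2) powr (1/p)) ^ n * lpnorm p (Bop x)"
    using Suc.IH[OF b(1)] by auto
  have eq: "(Bop ^^ Suc n) x = (Bop ^^ n) (Bop x)" by (simp only: funpow_Suc_right o_apply)
  have "lpnorm p ((Bop ^^ n) (Bop x)) \<le> ((1/2) powr (1/p)) ^ n * lpnorm p (Bop x)" using IH(2) .
  also have "\<dots> \<le> ((1/2) powr (1/p)) ^ n * ((1/2) powr (1/p) * lpnorm p x)"
    by (rule mult_left_mono[OF b(2)]) simp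
  also have "\<dots> = ((1/2) powr (1/p)) ^ Suc n * lpnorm p x" by (simp add: mult.assoc)
  finally show ?case unfolding eq using IH(1) by simp
qed

definition phi :: "cu \<Rightarrow> complex" where
  "phi t = of_real ((1/2) ^ length (fst t))"

lemma harm_phi: "harm phi"
  unfolding harm_def phi_def by (auto simp: norm_power power_le_one)

definition a1 :: "cu \<Rightarrow> complex" where
  "a1 = (\<lambda>s. (1/2) * delta ([], [G1]) s) + (\<lambda>s. (1/2) * delta ([], [G2]) s)"

lemma a1_l1: "a1 \<in> l1" unfolding a1_def by (intro l1_add l1_scal delta_l1)

fun an :: "nat \<Rightarrow> cu \<Rightarrow> complex" where
  "an 0 = delta ([], [])"
| "an (Suc n) = conv (an n) a1"

lemma an_l1: "an n \<in> l1"
  by (induction n) (auto intro: conv_l1 a1_l1)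

lemma LL_mulp_a1: "LL (mulp phi s) a1 = phi s"
proof -
  obtain x y where s: "s = (x, y)" by force
  have b: "\<And>t. norm (mulp phi s t) \<le> 1" using harm_right[OF harm_phi] harm_bound by blast
  have "LL (mulp phi s) a1 = LL (mulp phi s) (\<lambda>s'. (1/2) * delta ([], [G1]) s') + LL (mulp phi s) (\<lambda>s'. (1/2) * delta ([], [G2]) s')"
    unfolding a1_def by (rule LL_add) (rule l1_scal[OF delta_l1], rule l1_scal[OF delta_l1], rule b)
  also have "\<dots> = (1/2) * mulp phi s ([], [G1]) + (1/2) * mulp phi s ([], [G2])"
    by (simp only: LL_scal LL_delta)
  also have "\<dots> = phi s" by (simp add: s mulp_def cu_mult_right_star phi_def)
  finally show ?thesis .
qed

lemma LL_phi_an: "LL phi (an n) = 1"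
proof (induction n)
  case 0 then show ?case by (simp add: LL_delta phi_def)
next
  case (Suc n)
  have "LL phi (an (Suc n)) = infsum (\<lambda>s. an n s * LL (mulp phi s) a1) UNIV"
    by (simp add: conv_LL_left[OF an_l1 a1_l1] harm_bound[OF harm_phi])
  also have "\<dots> = LL phi (an n)" by (simp only: LL_mulp_a1, simp only: LL_def)
  finally show ?case using Suc by simp
qed

lemma qnorm_an: "qnorm (an n) \<ge> 1"
  using qnorm_lower[OF an_l1 harm_phi, of n] LL_phi_an by simp

context Th begin

lemma Th_a1: "x \<in> lp p \<Longrightarrow> \<Theta> (qmap a1) x = Bop x"
proof -
  assume x: "x \<in> lp p"
  have "\<Theta> (qmap a1) x = \<Theta> (qmap (\<lambda>s. (1/2) * delta ([], [G1]) s)) x + \<Theta> (qmap (\<lambda>s. (1/2) * delta ([], [G2]) s)) x"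
    unfolding a1_def by (rule Th_add[OF l1_scal[OF delta_l1] l1_scal[OF delta_l1] x])
  also have "\<dots> = (\<lambda>n. (1/2) * \<Theta> (qmap (delta ([], [G1]))) x n) + (\<lambda>n. (1/2) * \<Theta> (qmap (delta ([], [G2]))) x n)"
    by (simp only: Th_scal[OF delta_l1 x])
  also have "\<dots> = Bop x" using Th_gen[OF x] by (auto simp: Bop_def Ai_step step_def fun_eq_iff field_simps)
  finally show ?thesis .
qed

lemma Th_an: "x \<in> lp p \<Longrightarrow> \<Theta> (qmap (an n)) x = (Bop ^^ n) x"
proof (induction n arbitrary: x)
  case 0 then show ?case using Th_e by simp
next
  case (Suc n)
  have "\<Theta> (qmap (an (Suc n))) x = \<Theta> (qmap (an n)) (\<Theta> (qmap a1) x)"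
    using Th_mult[OF an_l1 a1_l1 Suc.prems] by simp
  also have "\<dots> = (Bop ^^ n) (Bop x)" using Th_a1 Suc Bop_est[OF p] by simp
  also have "\<dots> = (Bop ^^ Suc n) x" by (simp only: funpow_Suc_right o_apply)
  finally show ?case .
qed

lemma opnorm_an: "opnorm p (\<Theta> (qmap (an n))) \<le> ((1/2) powr (1/p)) ^ n"
proof -
  have "opnorm p (\<Theta> (qmap (an n))) = opnorm p (Bop ^^ n)"
    by (rule opnorm_cong) (rule Th_an)
  also have "\<dots> \<le> ((1/2) powr (1/p)) ^ n"
  proof (rule opnorm_least[OF pp])
    fix x assume x: "x \<in> lp p" "lpnorm p x \<le> 1"
    have "lpnorm p ((Bop ^^ n) x) \<le> ((1/2) powr (1/p)) ^ n * lpnorm p x"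
      using Bop_pow_est[OF p x(1)] by blast
    also have "\<dots> \<le> ((1/2) powr (1/p)) ^ n" using x(2) lpnorm_nonneg[of p x]
      by (simp add: mult_left_le)
    finally show "lpnorm p ((Bop ^^ n) x) \<le> ((1/2) powr (1/p)) ^ n" .
  qed
  finally show ?thesis .
qed

lemma not_bdd_below: "\<not> (\<exists>c>0. \<forall>a\<in>l1. opnorm p (\<Theta> (qmap a)) \<ge> c * qnorm a)"
proof
  assume "\<exists>c>0. \<forall>a\<in>l1. opnorm p (\<Theta> (qmap a)) \<ge> c * qnorm a"
  then obtain c where c: "c > 0" "\<forall>a\<in>l1. opnorm p (\<Theta> (qmap a)) \<ge> c * qnorm a" by blast
  have r1: "(1/2::real) powr (1/p) < 1"
    using powr_less_mono2[of "1/p" "1/2" 1] pp by simp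
  obtain n where n: "((1/2::real) powr (1/p)) ^ n < c" using real_arch_pow_inv[OF c(1) r1] by blast
  have "c \<le> c * qnorm (an n)" using qnorm_an[of n] c(1) by simp
  also have "\<dots> \<le> opnorm p (\<Theta> (qmap (an n)))" using c(2) an_l1 by blast
  also have "\<dots> \<le> ((1/2) powr (1/p)) ^ n" by (rule opnorm_an)
  finally show False using n by simp
qed

lemma injective: "\<forall>X\<in>quot. \<forall>Y\<in>quot. (\<forall>x\<in>lp p. \<Theta> X x = \<Theta> Y x) \<longrightarrow> X = Y"
proof (intro ballI impI)
  fix X Y assume X: "X \<in> quot" and Y: "Y \<in> quot" and e: "\<forall>x\<in>lp p. \<Theta> X x = \<Theta> Y x"
  obtain a where a: "a \<in> l1" "X = qmap a" using X by (auto simp: quot_def)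
  obtain b where b: "b \<in> l1" "Y = qmap b" using Y by (auto simp: quot_def)
  have "LL (chi n m) (a - b) = 0" for n m
  proof -
    have "LL (chi n m) (a - b) = \<Theta> (qmap (a - b)) (ee n) m"
      using Th_entry[of "a - b"] a b by simp
    also have "\<dots> = \<Theta> (qmap a) (ee n) m - \<Theta> (qmap b) (ee n) m"
      using Th_diff[OF a(1) b(1) ee_lp[OF pp]] by simp
    also have "\<dots> = 0" using e a b ee_lp[OF pp] by simp
    finally show ?thesis .
  qed
  then have "a - b \<in> J" using ker_J[of "a - b"] a b by simp
  then show "X = Y" using a b qmap_eq by simp
qed

end


theorem proposition3p20:
  fixes p :: real
    and \<Theta> :: "(cu \<Rightarrow> complex) set \<Rightarrow> (nat \<Rightarrow> complex) \<Rightarrow> nat \<Rightarrow> complex"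
  assumes p: "p \<ge> 1"
    and bop: "\<forall>X\<in>quot. is_bop p (\<Theta> X)"
    and hom_add: "\<forall>a\<in>l1. \<forall>b\<in>l1. \<forall>x\<in>lp p.
        \<Theta> (qmap (a + b)) x = \<Theta> (qmap a) x + \<Theta> (qmap b) x"
    and hom_scal: "\<forall>c::complex. \<forall>a\<in>l1. \<forall>x\<in>lp p.
        \<Theta> (qmap (\<lambda>s. c * a s)) x = (\<lambda>n. c * \<Theta> (qmap a) x n)"
    and hom_mult: "\<forall>a\<in>l1. \<forall>b\<in>l1. \<forall>x\<in>lp p.
        \<Theta> (qmap (conv a b)) x = \<Theta> (qmap a) (\<Theta> (qmap b) x)"
    and cont: "\<forall>a\<in>l1. \<forall>e>0. \<exists>d>0. \<forall>b\<in>l1.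
        qnorm (b - a) < d \<longrightarrow> opnorm p (\<lambda>x. \<Theta> (qmap b) x - \<Theta> (qmap a) x) < e"
    and gens: "\<forall>i. \<forall>x\<in>lp p. \<Theta> (qmap (delta (cu_star i))) x = Ai i x"
  shows "(\<forall>X\<in>quot. \<forall>Y\<in>quot. (\<forall>x\<in>lp p. \<Theta> X x = \<Theta> Y x) \<longrightarrow> X = Y) \<and>
         \<not> (\<exists>c>0. \<forall>a\<in>l1. opnorm p (\<Theta> (qmap a)) \<ge> c * qnorm a)"
  proof -
  have T: "Th p \<Theta>" unfolding Th_def using assms by blast
  show ?thesis using Th.injective[OF T] Th.not_bdd_below[OF T] by blast
qed

end
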